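(* Let $\alpha:X\to X$ be a homeomorphism of a compact metric space $X$ and $\mathscr V$ a line bundle over $X$. Then for every $n\geq 1$ there is a Hilbert $C(X)$-bimodule isomorphism $\psi:\Gamma(\mathscr V,\alpha)^{\otimes n}\to\Gamma(\mathscr V^{(n)},\alpha^n)$ such that for $\xi_1,\dots,\xi_n\in\Gamma(\mathscr V,\alpha)$ and $x\in X$, \[\psi(\xi_1\otimes\xi_2\otimes\cdots\otimes\xi_n)(x)=\xi_1(\alpha^{n-1}(x))\otimes\xi_2(\alpha^{n-2}(x))\otimes\cdots\otimes\xi_n(x).\] (For $n=0$, $\psi$ is the identity of $C(X)$.)
   Context: $\mathscr V$ is a Hermitian complex line bundle. For a line bundle $\mathscr W$ and a homeomorphism $\beta$, $\Gamma(\mathscr W,\beta)$ denotes the Hilbert $C(X)$-bimodule whose underlying space is the space of continuous sections of $\mathscr W$, with right action $(\xi f)(x)=\xi(x)f(x)$, right inner product $\langle\xi,\eta\rangle(x)=\langle\xi(x),\eta(x)\rangle_{\mathscr W_x}$, left action $f\cdot\xi=\xi\,(f\circ\beta)$ and left inner product $\langle\eta,\xi\rangle\circ\beta^{-1}$. $\Gamma(\mathscr V,\alpha)^{\otimes n}$ is the $n$-fold $C(X)$-balanced interior tensor product of Hilbert bimodules, with right inner product $\langle\xi_1\otimes\eta_1,\xi_2\otimes\eta_2\rangle=\langle\eta_1,\langle\xi_1,\xi_2\rangle\eta_2\rangle$ and analogous left inner product. $\mathscr V^{(n)}=(\alpha^{n-1})^*\mathscr V\otimes(\alpha^{n-2})^*\mathscr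 V\otimes\cdots\otimes\alpha^*\mathscr V\otimes\mathscr V$, whose fibre at $x$ is $\mathscr V_{\alpha^{n-1}(x)}\otimes\cdots\otimes\mathscr V_{\alpha(x)}\otimes\mathscr V_x$; $\mathscr V^{(0)}=X\times\mathbb C$. A Hilbert bimodule isomorphism is a bijective bimodule map preserving both inner products. *)

theory Defs
  imports "HOL-Analysis.Analysis"
begin

text \<open>A Hermitian line bundle over X is given by an open cover U and transition
functions g with |g| = 1; fibre vectors are local coordinate families v with
v i = g i j x * v j on overlaps (and v i = 0 when x is not in U i).\<close>

definition is_cocycle :: "('i \<Rightarrow> 'a::topological_space set) \<Rightarrow> ('i \<Rightarrow> 'i \<Rightarrow> 'a \<Rightarrow> complex) \<Rightarrow> bool" where
  "is_cocycle U g \<longleftrightarrow> (\<forall>i. open (U i)) \<and> (\<Union>i. U i) = UNIV \<and>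
     (\<forall>i j. continuous_on (U i \<inter> U j) (g i j)) \<and>
     (\<forall>i j x. x \<in> U i \<inter> U j \<longrightarrow> cmod (g i j x) = 1) \<and>
     (\<forall>i x. x \<in> U i \<longrightarrow> g i i x = 1) \<and>
     (\<forall>i j k x. x \<in> U i \<inter> U j \<inter> U k \<longrightarrow> g i j x * g j k x = g i k x)"

definition fib :: "('i \<Rightarrow> 'a set) \<Rightarrow> ('i \<Rightarrow> 'i \<Rightarrow> 'a \<Rightarrow> complex) \<Rightarrow> 'a \<Rightarrow> ('i \<Rightarrow> complex) set" where
  "fib U g x = {v. (\<forall>i. x \<notin> U i \<longrightarrow> v i = 0) \<and> (\<forall>i j. x \<in> U i \<inter> U j \<longrightarrow> v i = g i j x * v j)}"

definition fip :: "('i \<Rightarrow> 'a set) \<Rightarrow> 'a \<Rightarrow> ('i \<Rightarrow> complex) \<Rightarrow> ('i \<Rightarrow> complex) \<Rightarrow> complex" where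
  "fip U x v w = (let i = (SOME i. x \<in> U i) in cnj (v i) * w i)"

definition sections :: "('i \<Rightarrow> 'a::topological_space set) \<Rightarrow> ('i \<Rightarrow> 'i \<Rightarrow> 'a \<Rightarrow> complex) \<Rightarrow> ('a \<Rightarrow> 'i \<Rightarrow> complex) set" where
  "sections U g = {\<xi>. (\<forall>x. \<xi> x \<in> fib U g x) \<and> (\<forall>i. continuous_on (U i) (\<lambda>x. \<xi> x i))}"

definition CX :: "('a::topological_space \<Rightarrow> complex) set" where
  "CX = {f. continuous_on UNIV f}"

definition bm_ract :: "('a \<Rightarrow> 'i \<Rightarrow> complex) \<Rightarrow> ('a \<Rightarrow> complex) \<Rightarrow> ('a \<Rightarrow> 'i \<Rightarrow> complex)" where
  "bm_ract \<xi> f = (\<lambda>x i. f x * \<xi> x i)"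

definition bm_lact :: "('a \<Rightarrow> 'a) \<Rightarrow> ('a \<Rightarrow> complex) \<Rightarrow> ('a \<Rightarrow> 'i \<Rightarrow> complex) \<Rightarrow> ('a \<Rightarrow> 'i \<Rightarrow> complex)" where
  "bm_lact \<beta> f \<xi> = (\<lambda>x i. f (\<beta> x) * \<xi> x i)"

definition bm_rip :: "('i \<Rightarrow> 'a set) \<Rightarrow> ('a \<Rightarrow> 'i \<Rightarrow> complex) \<Rightarrow> ('a \<Rightarrow> 'i \<Rightarrow> complex) \<Rightarrow> 'a \<Rightarrow> complex" where
  "bm_rip U \<xi> \<eta> = (\<lambda>x. fip U x (\<xi> x) (\<eta> x))"

definition bm_lip :: "('i \<Rightarrow> 'a set) \<Rightarrow> ('a \<Rightarrow> 'a) \<Rightarrow> ('a \<Rightarrow> 'i \<Rightarrow> complex) \<Rightarrow> ('a \<Rightarrow> 'i \<Rightarrow> complex) \<Rightarrow> 'a \<Rightarrow> complex" where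
  "bm_lip U \<beta> \<xi> \<eta> = (\<lambda>x. fip U (inv \<beta> x) (\<eta> (inv \<beta> x)) (\<xi> (inv \<beta> x)))"

definition sec_add :: "('a \<Rightarrow> 'i \<Rightarrow> complex) \<Rightarrow> ('a \<Rightarrow> 'i \<Rightarrow> complex) \<Rightarrow> ('a \<Rightarrow> 'i \<Rightarrow> complex)" where
  "sec_add \<xi> \<eta> = (\<lambda>x i. \<xi> x i + \<eta> x i)"

definition sec_scale :: "complex \<Rightarrow> ('a \<Rightarrow> 'i \<Rightarrow> complex) \<Rightarrow> ('a \<Rightarrow> 'i \<Rightarrow> complex)" where
  "sec_scale c \<xi> = (\<lambda>x i. c * \<xi> x i)"

text \<open>Index lists ks of length n; position k (0-based) is the factor pulled back by alpha^(n-1-k).\<close>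
definition pow_U :: "('a \<Rightarrow> 'a) \<Rightarrow> ('i \<Rightarrow> 'a set) \<Rightarrow> nat \<Rightarrow> 'i list \<Rightarrow> 'a set" where
  "pow_U \<alpha> U n ks = {x. length ks = n \<and> (\<forall>k<n. (\<alpha> ^^ (n - 1 - k)) x \<in> U (ks ! k))}"

definition pow_g :: "('a \<Rightarrow> 'a) \<Rightarrow> ('i \<Rightarrow> 'i \<Rightarrow> 'a \<Rightarrow> complex) \<Rightarrow> nat \<Rightarrow> 'i list \<Rightarrow> 'i list \<Rightarrow> 'a \<Rightarrow> complex" where
  "pow_g \<alpha> g n ks ls x = (\<Prod>k<n. g (ks ! k) (ls ! k) ((\<alpha> ^^ (n - 1 - k)) x))"

text \<open>Elementary tensor v_1 (x) ... (x) v_n of fibre vectors, in local coordinates.\<close>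
definition tens_fib :: "('i \<Rightarrow> complex) list \<Rightarrow> 'i list \<Rightarrow> complex" where
  "tens_fib vs = (\<lambda>ks. if length ks = length vs then (\<Prod>k<length vs. (vs ! k) (ks ! k)) else 0)"

definition elem_image :: "('a \<Rightarrow> 'a) \<Rightarrow> nat \<Rightarrow> ('a \<Rightarrow> 'i \<Rightarrow> complex) list \<Rightarrow> 'a \<Rightarrow> 'i list \<Rightarrow> complex" where
  "elem_image \<alpha> n \<xi>s = (\<lambda>x. tens_fib (map (\<lambda>k. (\<xi>s ! k) ((\<alpha> ^^ (n - 1 - k)) x)) [0..<n]))"

text \<open>Formal finite sums of elementary tensors xi_1 (x) ... (x) xi_n (a list of n-lists of sections).
The tensor power is the completion of these modulo null vectors for the inner-product seminorm;
elements of the completion are represented by Cauchy sequences of formal sums.\<close>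

definition tp_wf :: "('i \<Rightarrow> 'a::topological_space set) \<Rightarrow> ('i \<Rightarrow> 'i \<Rightarrow> 'a \<Rightarrow> complex) \<Rightarrow> nat \<Rightarrow> ('a \<Rightarrow> 'i \<Rightarrow> complex) list list \<Rightarrow> bool" where
  "tp_wf U g n zs \<longleftrightarrow> (\<forall>z\<in>set zs. length z = n \<and> set z \<subseteq> sections U g)"

text \<open>Right inner product of elementary tensors, computed via
 <Xi (x) xi, H (x) eta> = <xi, <Xi,H> . eta>.\<close>
definition rip_el :: "('i \<Rightarrow> 'a set) \<Rightarrow> ('a \<Rightarrow> 'a) \<Rightarrow> ('a \<Rightarrow> 'i \<Rightarrow> complex) list \<Rightarrow> ('a \<Rightarrow> 'i \<Rightarrow> complex) list \<Rightarrow> 'a \<Rightarrow> complex" where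
  "rip_el U \<alpha> xs ys = foldl (\<lambda>f (\<xi>, \<eta>). bm_rip U \<xi> (bm_lact \<alpha> f \<eta>)) (\<lambda>_. 1) (zip xs ys)"

text \<open>Left inner product of elementary tensors, computed via
 lip(xi (x) Xi, eta (x) H) = lip(xi . lip(Xi,H), eta).\<close>
definition lip_el :: "('i \<Rightarrow> 'a set) \<Rightarrow> ('a \<Rightarrow> 'a) \<Rightarrow> ('a \<Rightarrow> 'i \<Rightarrow> complex) list \<Rightarrow> ('a \<Rightarrow> 'i \<Rightarrow> complex) list \<Rightarrow> 'a \<Rightarrow> complex" where
  "lip_el U \<alpha> xs ys = foldr (\<lambda>(\<xi>, \<eta>) h. bm_lip U \<alpha> (bm_ract \<xi> h) \<eta>) (zip xs ys) (\<lambda>_. 1)"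

definition fs_rip :: "('i \<Rightarrow> 'a set) \<Rightarrow> ('a \<Rightarrow> 'a) \<Rightarrow> ('a \<Rightarrow> 'i \<Rightarrow> complex) list list \<Rightarrow> ('a \<Rightarrow> 'i \<Rightarrow> complex) list list \<Rightarrow> 'a \<Rightarrow> complex" where
  "fs_rip U \<alpha> zs ws = (\<lambda>x. \<Sum>z\<leftarrow>zs. \<Sum>w\<leftarrow>ws. rip_el U \<alpha> z w x)"

definition fs_lip :: "('i \<Rightarrow> 'a set) \<Rightarrow> ('a \<Rightarrow> 'a) \<Rightarrow> ('a \<Rightarrow> 'i \<Rightarrow> complex) list list \<Rightarrow> ('a \<Rightarrow> 'i \<Rightarrow> complex) list list \<Rightarrow> 'a \<Rightarrow> complex" where
  "fs_lip U \<alpha> zs ws = (\<lambda>x. \<Sum>z\<leftarrow>zs. \<Sum>w\<leftarrow>ws. lip_el U \<alpha> z w x)"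

definition fs_scale :: "complex \<Rightarrow> ('a \<Rightarrow> 'i \<Rightarrow> complex) list list \<Rightarrow> ('a \<Rightarrow> 'i \<Rightarrow> complex) list list" where
  "fs_scale c zs = map (\<lambda>z. case z of [] \<Rightarrow> [] | \<xi> # r \<Rightarrow> sec_scale c \<xi> # r) zs"

definition fs_diff :: "('a \<Rightarrow> 'i \<Rightarrow> complex) list list \<Rightarrow> ('a \<Rightarrow> 'i \<Rightarrow> complex) list list \<Rightarrow> ('a \<Rightarrow> 'i \<Rightarrow> complex) list list" where
  "fs_diff zs ws = zs @ fs_scale (-1) ws"

definition fs_ract :: "('a \<Rightarrow> 'i \<Rightarrow> complex) list list \<Rightarrow> ('a \<Rightarrow> complex) \<Rightarrow> ('a \<Rightarrow> 'i \<Rightarrow> complex) list list" where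
  "fs_ract zs f = map (\<lambda>z. butlast z @ [bm_ract (last z) f]) zs"

definition fs_lact :: "('a \<Rightarrow> 'a) \<Rightarrow> ('a \<Rightarrow> complex) \<Rightarrow> ('a \<Rightarrow> 'i \<Rightarrow> complex) list list \<Rightarrow> ('a \<Rightarrow> 'i \<Rightarrow> complex) list list" where
  "fs_lact \<alpha> f zs = map (\<lambda>z. bm_lact \<alpha> f (hd z) # tl z) zs"

definition fs_norm :: "('i \<Rightarrow> 'a set) \<Rightarrow> ('a \<Rightarrow> 'a) \<Rightarrow> ('a \<Rightarrow> 'i \<Rightarrow> complex) list list \<Rightarrow> real" where
  "fs_norm U \<alpha> zs = sqrt (Sup (range (\<lambda>x. cmod (fs_rip U \<alpha> zs zs x))))"

definition tp_cauchy :: "('i \<Rightarrow> 'a::topological_space set) \<Rightarrow> ('i \<Rightarrow> 'i \<Rightarrow> 'a \<Rightarrow> complex) \<Rightarrow> ('a \<Rightarrow> 'a) \<Rightarrow> nat \<Rightarrow> (nat \<Rightarrow> ('a \<Rightarrow> 'i \<Rightarrow> complex) list list) \<Rightarrow> bool" where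
  "tp_cauchy U g \<alpha> n Z \<longleftrightarrow> (\<forall>k. tp_wf U g n (Z k)) \<and>
     (\<forall>e>0. \<exists>N. \<forall>m\<ge>N. \<forall>k\<ge>N. fs_norm U \<alpha> (fs_diff (Z m) (Z k)) < e)"

definition unif_conv :: "(nat \<Rightarrow> 'a \<Rightarrow> complex) \<Rightarrow> ('a \<Rightarrow> complex) \<Rightarrow> bool" where
  "unif_conv F f \<longleftrightarrow> (\<forall>e>0. \<exists>N. \<forall>k\<ge>N. \<forall>x. cmod (F k x - f x) < e)"

end

theory Submission
  imports Defs
begin


lemma cocy_facts:
  assumes "is_cocycle U g"
  shows "\<And>i. open (U i)" "\<And>x. \<exists>i. x \<in> U i"
    "\<And>i j x. x \<in> U i \<Longrightarrow> x \<in> U j \<Longrightarrow> cmod (g i j x) = 1"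
    "\<And>i x. x \<in> U i \<Longrightarrow> g i i x = 1"
    "\<And>i j k x. x \<in> U i \<Longrightarrow> x \<in> U j \<Longrightarrow> x \<in> U k \<Longrightarrow> g i j x * g j k x = g i k x"
    "\<And>i j. continuous_on (U i \<inter> U j) (g i j)"
  using assms unfolding is_cocycle_def by (auto simp: set_eq_iff)

lemma cnj_mult_mod1: "cmod z = 1 \<Longrightarrow> cnj z * z = 1"
  by (metis complex_norm_square mult.commute of_real_1 power_one)

lemma fip_chart_gen:
  assumes "x \<in> U i" "x \<in> U (SOME i. x \<in> U i)"
    and "v (SOME i. x \<in> U i) = c * v i" "w (SOME i. x \<in> U i) = c * w i" "cmod c = 1"
  shows "fip U x v w = cnj (v i) * w i"
proof -
  have "fip U x v w = cnj (c * v i) * (c * w i)"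
    unfolding fip_def Let_def using assms by simp
  also have "\<dots> = (cnj c * c) * (cnj (v i) * w i)" by (simp add: algebra_simps)
  finally show ?thesis using cnj_mult_mod1[OF assms(5)] by simp
qed

lemma fib_trans: "v \<in> fib U g x \<Longrightarrow> x \<in> U i \<Longrightarrow> x \<in> U j \<Longrightarrow> v i = g i j x * v j"
  unfolding fib_def by blast

lemma fib_zero: "v \<in> fib U g x \<Longrightarrow> x \<notin> U i \<Longrightarrow> v i = 0"
  unfolding fib_def by blast

lemma fibI: "(\<And>i. x \<notin> U i \<Longrightarrow> v i = 0) \<Longrightarrow> (\<And>i j. x \<in> U i \<Longrightarrow> x \<in> U j \<Longrightarrow> v i = g i j x * v j) \<Longrightarrow> v \<in> fib U g x"
  unfolding fib_def by blast

lemma sectionsI: "(\<And>x. \<xi> x \<in> fib U g x) \<Longrightarrow> (\<And>i. continuous_on (U i) (\<lambda>x. \<xi> x i)) \<Longrightarrow> \<xi> \<in> sections U g"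
  unfolding sections_def by blast

lemma sectionsD: "\<xi> \<in> sections U g \<Longrightarrow> \<xi> x \<in> fib U g x"
  "\<xi> \<in> sections U g \<Longrightarrow> continuous_on (U i) (\<lambda>x. \<xi> x i)"
  unfolding sections_def by blast+

lemma fip_chart:
  assumes "is_cocycle U g" "v \<in> fib U g x" "w \<in> fib U g x" "x \<in> U i"
  shows "fip U x v w = cnj (v i) * w i"
proof -
  let ?j = "SOME i. x \<in> U i"
  have j: "x \<in> U ?j" by (rule someI[of _ i], fact)
  have "v ?j = g ?j i x * v i" by (rule fib_trans[OF assms(2) j assms(4)])
  moreover have "w ?j = g ?j i x * w i" by (rule fib_trans[OF assms(3) j assms(4)])
  moreover have "cmod (g ?j i x) = 1" by (rule cocy_facts(3)[OF assms(1) j assms(4)])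
  ultimately show ?thesis by (rule fip_chart_gen[OF assms(4) j])
qed

lemma fip_scale2: "fip U x v (\<lambda>i. c * w i) = c * fip U x v w"
  unfolding fip_def Let_def by simp

lemma fip_scale1: "fip U x (\<lambda>i. c * v i) w = cnj c * fip U x v w"
  unfolding fip_def Let_def by simp

lemma rip_el_foldl:
  "length xs = length ys \<Longrightarrow>
   foldl (\<lambda>f (\<xi>, \<eta>). bm_rip U \<xi> (bm_lact \<alpha> f \<eta>)) f0 (zip xs ys) =
   (\<lambda>x. f0 ((\<alpha> ^^ length xs) x) * (\<Prod>k<length xs. fip U ((\<alpha> ^^ (length xs - 1 - k)) x)
        ((xs!k) ((\<alpha> ^^ (length xs - 1 - k)) x)) ((ys!k) ((\<alpha> ^^ (length xs - 1 - k)) x))))"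
proof (induction xs arbitrary: ys f0)
  case Nil then show ?case by simp
next
  case (Cons a xs)
  then obtain b ys' where ys: "ys = b # ys'" "length xs = length ys'" by (cases ys) auto
  let ?f1 = "\<lambda>x. fip U x (a x) (b x) * f0 (\<alpha> x)"
  have f1: "bm_rip U a (bm_lact \<alpha> f0 b) = ?f1"
    unfolding bm_rip_def bm_lact_def fip_def Let_def by (auto simp: algebra_simps)
  define m where "m = length xs"
  have "foldl (\<lambda>f (\<xi>, \<eta>). bm_rip U \<xi> (bm_lact \<alpha> f \<eta>)) f0 (zip (a # xs) ys) x =
     ?f1 ((\<alpha> ^^ m) x) * (\<Prod>k<m. fip U ((\<alpha> ^^ (m - 1 - k)) x)
        ((xs!k) ((\<alpha> ^^ (m - 1 - k)) x)) ((ys'!k) ((\<alpha> ^^ (m - 1 - k)) x)))" for x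
    by (simp only: ys zip_Cons_Cons foldl_Cons prod.case f1 Cons.IH[OF ys(2)] m_def)
  also have "\<dots>x = f0 ((\<alpha> ^^ Suc m) x) * (fip U ((\<alpha> ^^ m) x) (a ((\<alpha> ^^ m) x)) (b ((\<alpha> ^^ m) x)) * (\<Prod>k<m. fip U ((\<alpha> ^^ (m - 1 - k)) x)
        ((xs!k) ((\<alpha> ^^ (m - 1 - k)) x)) ((ys'!k) ((\<alpha> ^^ (m - 1 - k)) x))))" for x
    by (simp only: funpow.simps(2) o_apply mult_ac)
  also have "\<dots>x = f0 ((\<alpha> ^^ length (a#xs)) x) * (\<Prod>k<length (a#xs). fip U ((\<alpha> ^^ (length (a#xs) - 1 - k)) x)
        (((a#xs)!k) ((\<alpha> ^^ (length (a#xs) - 1 - k)) x)) ((ys!k) ((\<alpha> ^^ (length (a#xs) - 1 - k)) x)))" for x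
    unfolding length_Cons m_def[symmetric] prod.lessThan_Suc_shift ys(1)
    by (simp only: nth_Cons_0 nth_Cons_Suc diff_Suc_Suc diff_Suc_1 diff_zero diff_diff_left plus_1_eq_Suc)
  finally show ?case by (rule ext)
qed

lemma rip_el_prod:
  "length xs = length ys \<Longrightarrow>
   rip_el U \<alpha> xs ys x = (\<Prod>k<length xs. fip U ((\<alpha> ^^ (length xs - 1 - k)) x)
        ((xs!k) ((\<alpha> ^^ (length xs - 1 - k)) x)) ((ys!k) ((\<alpha> ^^ (length xs - 1 - k)) x)))"
  unfolding rip_el_def by (simp add: rip_el_foldl)

lemma lip_el_prod:
  "length xs = length ys \<Longrightarrow>
   lip_el U \<alpha> xs ys x = (\<Prod>k<length xs. fip U ((inv \<alpha> ^^ Suc k) x)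
        ((ys!k) ((inv \<alpha> ^^ Suc k) x)) ((xs!k) ((inv \<alpha> ^^ Suc k) x)))"
proof (induction xs arbitrary: ys x)
  case Nil then show ?case by (simp add: lip_el_def)
next
  case (Cons a xs)
  then obtain b ys' where ys: "ys = b # ys'" "length xs = length ys'" by (cases ys) auto
  define m where "m = length xs"
  have "lip_el U \<alpha> (a # xs) ys x = lip_el U \<alpha> xs ys' (inv \<alpha> x) * fip U (inv \<alpha> x) (b (inv \<alpha> x)) (a (inv \<alpha> x))"
    unfolding ys lip_el_def zip_Cons_Cons foldr_Cons o_def prod.case
    unfolding bm_lip_def bm_ract_def fip_scale2 ..
  also have "\<dots> = (\<Prod>k<m. fip U ((inv \<alpha> ^^ Suc k) (inv \<alpha> x))
        ((ys'!k) ((inv \<alpha> ^^ Suc k) (inv \<alpha> x))) ((xs!k) ((inv \<alpha> ^^ Suc k) (inv \<alpha> x)))) * fip U (inv \<alpha> x) (b (inv \<alpha> x)) (a (inv \<alpha> x))"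
    by (simp only: Cons.IH[OF ys(2)] m_def)
  also have "\<dots> = (\<Prod>k<length (a # xs). fip U ((inv \<alpha> ^^ Suc k) x)
        ((ys!k) ((inv \<alpha> ^^ Suc k) x)) (((a # xs)!k) ((inv \<alpha> ^^ Suc k) x)))"
    unfolding length_Cons m_def[symmetric] prod.lessThan_Suc_shift ys(1)
    by (simp only: nth_Cons_0 nth_Cons_Suc funpow_Suc_right o_apply funpow_0 mult.commute)
  finally show ?case .
qed

lemma elem_image_eq:
  "elem_image \<alpha> n \<xi>s x ks = (if length ks = n then (\<Prod>k<n. (\<xi>s!k) ((\<alpha>^^(n-1-k)) x) (ks!k)) else 0)"
  by (simp add: elem_image_def tens_fib_def)

lemma funpow_cont: fixes \<alpha> :: "'a::topological_space \<Rightarrow> 'a" shows "continuous_on UNIV \<alpha> \<Longrightarrow> continuous_on S (\<alpha> ^^ j)"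
proof (induction j arbitrary: S)
  case 0
  have "\<alpha> ^^ 0 = (\<lambda>x. x)" by (rule ext) simp
  then show ?case by (simp add: continuous_on_id)
next
  case (Suc j)
  have "continuous_on S (\<alpha> \<circ> (\<alpha>^^j))"
    by (rule continuous_on_compose[OF Suc.IH[OF Suc.prems]]) (rule continuous_on_subset[OF Suc.prems], simp)
  then show ?case by simp
qed

lemma sections_add: assumes "\<xi> \<in> sections U g" "\<eta> \<in> sections U g" shows "sec_add \<xi> \<eta> \<in> sections U g"
proof -
  have a: "\<forall>x. \<xi> x \<in> fib U g x" "\<forall>i. continuous_on (U i) (\<lambda>x. \<xi> x i)"
    "\<forall>x. \<eta> x \<in> fib U g x" "\<forall>i. continuous_on (U i) (\<lambda>x. \<eta> x i)"
    using assms unfolding sections_def by auto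
  have "sec_add \<xi> \<eta> x \<in> fib U g x" for x
    using spec[OF a(1), of x] spec[OF a(3), of x] unfolding fib_def sec_add_def
    by (simp only: mem_Collect_eq) (metis (no_types, lifting) add.right_neutral distrib_left)
  moreover have "continuous_on (U i) (\<lambda>x. sec_add \<xi> \<eta> x i)" for i
    unfolding sec_add_def using a(2,4) by (simp add: continuous_on_add)
  ultimately show ?thesis unfolding sections_def by blast
qed

lemma sections_scale: assumes "\<xi> \<in> sections U g" shows "sec_scale c \<xi> \<in> sections U g"
proof -
  have a: "\<forall>x. \<xi> x \<in> fib U g x" "\<forall>i. continuous_on (U i) (\<lambda>x. \<xi> x i)"
    using assms unfolding sections_def by auto
  have "sec_scale c \<xi> x \<in> fib U g x" for x
    using spec[OF a(1), of x] unfolding fib_def sec_scale_def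
    by (simp only: mem_Collect_eq) (metis (no_types, lifting) mult_zero_right mult.left_commute)
  moreover have "continuous_on (U i) (\<lambda>x. sec_scale c \<xi> x i)" for i
    unfolding sec_scale_def using a(2) by (simp add: continuous_on_mult continuous_on_const)
  ultimately show ?thesis unfolding sections_def by blast
qed

lemma sections_zero: "(\<lambda>x i. 0) \<in> sections U g"
  unfolding sections_def fib_def by auto

definition Es :: "('a \<Rightarrow> 'a) \<Rightarrow> nat \<Rightarrow> ('a \<Rightarrow> 'i \<Rightarrow> complex) list list \<Rightarrow> 'a \<Rightarrow> 'i list \<Rightarrow> complex" where
  "Es \<alpha> n zs = (\<lambda>x ks. \<Sum>z\<leftarrow>zs. elem_image \<alpha> n z x ks)"

definition Psi :: "('a \<Rightarrow> 'a) \<Rightarrow> nat \<Rightarrow> (nat \<Rightarrow> ('a \<Rightarrow> 'i \<Rightarrow> complex) list list) \<Rightarrow> 'a \<Rightarrow> 'i list \<Rightarrow> complex" where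
  "Psi \<alpha> n Z = (\<lambda>x ks. lim (\<lambda>k. Es \<alpha> n (Z k) x ks))"

lemma Es_Nil: "Es \<alpha> n [] = (\<lambda>x i. 0)" by (simp add: Es_def)
lemma Es_Cons: "Es \<alpha> n (z # zs) = sec_add (elem_image \<alpha> n z) (Es \<alpha> n zs)"
  by (simp add: Es_def sec_add_def)
lemma Es_append: "Es \<alpha> n (zs @ ws) x ks = Es \<alpha> n zs x ks + Es \<alpha> n ws x ks"
  by (simp add: Es_def)




locale lb =
  fixes \<alpha> :: "'a::metric_space \<Rightarrow> 'a" and U :: "'i \<Rightarrow> 'a set"
    and g :: "'i \<Rightarrow> 'i \<Rightarrow> 'a \<Rightarrow> complex" and n :: nat
  assumes cpt: "compact (UNIV :: 'a set)" and bij: "bij \<alpha>" and cont: "continuous_on UNIV \<alpha>"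
    and cocy: "is_cocycle U g" and n1: "n \<ge> 1"
begin

abbreviation "PU \<equiv> pow_U \<alpha> U n"
abbreviation "PG \<equiv> pow_g \<alpha> g n"
abbreviation "S \<equiv> sections PU PG"

lemmas cf = cocy_facts[OF cocy]

lemma pow_cover: "\<exists>ks. x \<in> PU ks"
proof -
  let ?ks = "map (\<lambda>k. SOME i. (\<alpha> ^^ (n-1-k)) x \<in> U i) [0..<n]"
  have "x \<in> PU ?ks" unfolding pow_U_def
    using cf(2) by (auto intro: someI_ex)
  then show ?thesis by blast
qed

definition "ks0 x = (SOME ks. x \<in> PU ks)"

lemma ks0: "x \<in> PU (ks0 x)"
  unfolding ks0_def using pow_cover by (rule someI_ex)

lemma fip_pow: "fip PU x v w = cnj (v (ks0 x)) * w (ks0 x)"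
  unfolding fip_def ks0_def Let_def by simp

lemma PU_len: "x \<in> PU ks \<Longrightarrow> length ks = n"
  unfolding pow_U_def by auto

lemma PU_mem: "x \<in> PU ks \<Longrightarrow> k < n \<Longrightarrow> (\<alpha> ^^ (n - 1 - k)) x \<in> U (ks ! k)"
  unfolding pow_U_def by auto

lemma PG_mod: "x \<in> PU ks \<Longrightarrow> x \<in> PU ls \<Longrightarrow> cmod (PG ks ls x) = 1"
proof -
  assume a: "x \<in> PU ks" "x \<in> PU ls"
  have "cmod (PG ks ls x) = (\<Prod>k<n. cmod (g (ks ! k) (ls ! k) ((\<alpha> ^^ (n - 1 - k)) x)))"
    unfolding pow_g_def by (simp add: prod_norm)
  also have "\<dots> = 1"
    by (rule prod.neutral) (use cf(3) PU_mem[OF a(1)] PU_mem[OF a(2)] in auto)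
  finally show ?thesis .
qed

lemma PU_open: "open (PU ks)"
proof (cases "length ks = n")
  case True
  have "PU ks = (\<Inter>k\<in>{..<n}. (\<alpha> ^^ (n - 1 - k)) -` U (ks ! k))"
    unfolding pow_U_def using True by auto
  also have "open \<dots>"
    by (intro open_INT finite_lessThan ballI open_vimage cf(1) funpow_cont[OF cont]) 
  finally show ?thesis .
next
  case False then have "PU ks = {}" unfolding pow_U_def by auto
  then show ?thesis by simp
qed

lemma elem_sec:
  assumes "length \<xi>s = n" "set \<xi>s \<subseteq> sections U g"
  shows "elem_image \<alpha> n \<xi>s \<in> S"
proof -
  have sec: "\<And>k. k < n \<Longrightarrow> \<xi>s ! k \<in> sections U g" using assms by auto
  have fb: "\<And>k y. k < n \<Longrightarrow> (\<xi>s ! k) y \<in> fib U g y" using sec unfolding sections_def by auto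
  have A: "elem_image \<alpha> n \<xi>s x ks = 0" if "x \<notin> PU ks" for x ks
  proof (cases "length ks = n")
    case True
    with that obtain k where k: "k < n" "(\<alpha> ^^ (n - 1 - k)) x \<notin> U (ks ! k)"
      unfolding pow_U_def by auto
    have "(\<xi>s!k) ((\<alpha>^^(n-1-k)) x) (ks!k) = 0" by (rule fib_zero[OF fb[OF k(1)] k(2)])
    then show ?thesis unfolding elem_image_eq using True k(1)
      by (auto intro: prod_zero)
  qed (simp add: elem_image_eq)
  have B: "elem_image \<alpha> n \<xi>s x ks = PG ks ls x * elem_image \<alpha> n \<xi>s x ls"
    if "x \<in> PU ks" "x \<in> PU ls" for x ks ls
  proof -
    have "\<And>k. k < n \<Longrightarrow> (\<xi>s!k) ((\<alpha>^^(n-1-k)) x) (ks!k) =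
       g (ks!k) (ls!k) ((\<alpha>^^(n-1-k)) x) * (\<xi>s!k) ((\<alpha>^^(n-1-k)) x) (ls!k)"
      using fb PU_mem[OF that(1)] PU_mem[OF that(2)] by (rule fib_trans)
    then show ?thesis unfolding elem_image_eq pow_g_def
      using PU_len[OF that(1)] PU_len[OF that(2)] by (simp add: prod.distrib)
  qed
  have C: "continuous_on (PU ks) (\<lambda>x. elem_image \<alpha> n \<xi>s x ks)" for ks
  proof (cases "length ks = n")
    case True
    have "continuous_on (PU ks) (\<lambda>x. (\<Prod>k<n. (\<xi>s!k) ((\<alpha>^^(n-1-k)) x) (ks!k)))"
    proof (intro continuous_on_prod)
      fix k assume "k \<in> {..<n}"
      then have k: "k < n" by simp
      have "continuous_on (U (ks!k)) (\<lambda>y. (\<xi>s!k) y (ks!k))" using sec[OF k] unfolding sections_def by auto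
      moreover have "(\<alpha>^^(n-1-k)) ` PU ks \<subseteq> U (ks!k)" using PU_mem k by auto
      ultimately show "continuous_on (PU ks) (\<lambda>x. (\<xi>s!k) ((\<alpha>^^(n-1-k)) x) (ks!k))"
        by (intro continuous_on_compose2[OF _ funpow_cont[OF cont]]) 
    qed
    then show ?thesis unfolding elem_image_eq using True by simp
  next
    case False then have "PU ks = {}" unfolding pow_U_def by auto
    then show ?thesis by simp
  qed
  show ?thesis by (intro sectionsI fibI A B C)
qed

lemma Es_sec: "tp_wf U g n zs \<Longrightarrow> Es \<alpha> n zs \<in> S"
proof (induction zs)
  case Nil then show ?case by (simp add: Es_Nil sections_zero)
next
  case (Cons z zs)
  then show ?case unfolding Es_Cons tp_wf_def
    by (intro sections_add elem_sec) auto
qed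

end

lemma sum_list_sesq:
  "(\<Sum>z\<leftarrow>zs. \<Sum>w\<leftarrow>ws. cnj (f z) * h w) = cnj (\<Sum>z\<leftarrow>zs. f z) * (\<Sum>w\<leftarrow>ws. h w :: complex)"
  by (induction zs) (simp_all add: sum_list_const_mult distrib_right)

lemma cont_sum_list:
  "(\<And>z. z \<in> set zs \<Longrightarrow> continuous_on S (f z)) \<Longrightarrow> continuous_on S (\<lambda>x. \<Sum>z\<leftarrow>zs. (f z x :: complex))"
  by (induction zs) (auto intro!: continuous_on_add continuous_on_const)

context lb
begin

lemma fip_pow_elem:
  assumes "length z = n" "set z \<subseteq> sections U g" "length w = n" "set w \<subseteq> sections U g"
  shows "fip PU x (elem_image \<alpha> n z x) (elem_image \<alpha> n w x) = rip_el U \<alpha> z w x"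
proof -
  have len: "length (ks0 x) = n" using PU_len[OF ks0] .
  have "fip PU x (elem_image \<alpha> n z x) (elem_image \<alpha> n w x) =
     cnj (\<Prod>k<n. (z!k) ((\<alpha>^^(n-1-k)) x) (ks0 x!k)) * (\<Prod>k<n. (w!k) ((\<alpha>^^(n-1-k)) x) (ks0 x!k))"
    by (simp only: fip_pow elem_image_eq len simp_thms if_True)
  also have "\<dots> = (\<Prod>k<n. cnj ((z!k) ((\<alpha>^^(n-1-k)) x) (ks0 x!k)) * (w!k) ((\<alpha>^^(n-1-k)) x) (ks0 x!k))"
    by (simp only: cnj_prod prod.distrib)
  also have "\<dots> = (\<Prod>k<n. fip U ((\<alpha>^^(n-1-k)) x) ((z!k) ((\<alpha>^^(n-1-k)) x)) ((w!k) ((\<alpha>^^(n-1-k)) x)))"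
  proof (rule prod.cong[OF refl])
    fix k assume "k \<in> {..<n}"
    then have k: "k < n" by simp
    have zk: "z ! k \<in> sections U g" and wk: "w ! k \<in> sections U g" using assms k by auto
    show "cnj ((z!k) ((\<alpha>^^(n-1-k)) x) (ks0 x!k)) * (w!k) ((\<alpha>^^(n-1-k)) x) (ks0 x!k) =
      fip U ((\<alpha>^^(n-1-k)) x) ((z!k) ((\<alpha>^^(n-1-k)) x)) ((w!k) ((\<alpha>^^(n-1-k)) x))"
      using fip_chart[OF cocy sectionsD(1)[OF zk] sectionsD(1)[OF wk] PU_mem[OF ks0 k]] by simp
  qed
  also have "\<dots> = rip_el U \<alpha> z w x"
    using rip_el_prod[of z w U \<alpha> x] assms(1,3) by simp
  finally show ?thesis .
qed

lemma fs_rip_eq: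
  assumes "tp_wf U g n zs" "tp_wf U g n ws"
  shows "fs_rip U \<alpha> zs ws x = cnj (Es \<alpha> n zs x (ks0 x)) * Es \<alpha> n ws x (ks0 x)"
proof -
  have "fs_rip U \<alpha> zs ws x = (\<Sum>z\<leftarrow>zs. \<Sum>w\<leftarrow>ws. cnj (elem_image \<alpha> n z x (ks0 x)) * elem_image \<alpha> n w x (ks0 x))"
    unfolding fs_rip_def
  proof (intro arg_cong[where f=sum_list] map_cong refl)
    fix z w assume "z \<in> set zs" "w \<in> set ws"
    then have "length z = n" "set z \<subseteq> sections U g" "length w = n" "set w \<subseteq> sections U g"
      using assms unfolding tp_wf_def by auto
    from fip_pow_elem[OF this, of x] show "rip_el U \<alpha> z w x = cnj (elem_image \<alpha> n z x (ks0 x)) * elem_image \<alpha> n w x (ks0 x)"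
      by (simp add: fip_pow)
  qed
  also have "\<dots> = cnj (Es \<alpha> n zs x (ks0 x)) * Es \<alpha> n ws x (ks0 x)"
    unfolding Es_def by (rule sum_list_sesq)
  finally show ?thesis .
qed

lemma fs_rip_self: "tp_wf U g n zs \<Longrightarrow> cmod (fs_rip U \<alpha> zs zs x) = (cmod (Es \<alpha> n zs x (ks0 x)))\<^sup>2"
  by (simp add: fs_rip_eq norm_mult power2_eq_square)

lemma fip_cont:
  assumes "\<xi> \<in> sections U g" "\<eta> \<in> sections U g"
  shows "continuous_on UNIV (\<lambda>y. fip U y (\<xi> y) (\<eta> y))"
proof -
  have "UNIV = (\<Union>i\<in>UNIV. U i)" using cf(2) by blast
  moreover have "continuous_on (\<Union>i\<in>UNIV. U i) (\<lambda>y. fip U y (\<xi> y) (\<eta> y))"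
  proof (rule continuous_on_open_UN)
    fix i
    show "open (U i)" by (rule cf(1))
    have "continuous_on (U i) (\<lambda>y. cnj (\<xi> y i) * \<eta> y i)"
      using sectionsD(2)[OF assms(1)] sectionsD(2)[OF assms(2)] by (intro continuous_on_mult continuous_on_cnj)
    then show "continuous_on (U i) (\<lambda>y. fip U y (\<xi> y) (\<eta> y))"
      by (rule continuous_on_cong[THEN iffD1, rotated 2])
         (auto intro!: fip_chart[symmetric] cocy sectionsD assms)
  qed
  ultimately show ?thesis by simp
qed

lemma rip_el_cont:
  assumes "length z = n" "set z \<subseteq> sections U g" "length w = n" "set w \<subseteq> sections U g"
  shows "continuous_on UNIV (rip_el U \<alpha> z w)"
proof -
  have "rip_el U \<alpha> z w = (\<lambda>x. \<Prod>k<n. fip U ((\<alpha>^^(n-1-k)) x) ((z!k) ((\<alpha>^^(n-1-k)) x)) ((w!k) ((\<alpha>^^(n-1-k)) x)))"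
    using rip_el_prod[of z w U \<alpha>] assms(1,3) by (intro ext) simp
  moreover have "continuous_on UNIV (\<lambda>x. \<Prod>k<n. fip U ((\<alpha>^^(n-1-k)) x) ((z!k) ((\<alpha>^^(n-1-k)) x)) ((w!k) ((\<alpha>^^(n-1-k)) x)))"
  proof (rule continuous_on_prod)
    fix k assume "k \<in> {..<n}"
    then have "z ! k \<in> sections U g" "w ! k \<in> sections U g" using assms by auto
    from fip_cont[OF this] show "continuous_on UNIV (\<lambda>x. fip U ((\<alpha>^^(n-1-k)) x) ((z!k) ((\<alpha>^^(n-1-k)) x)) ((w!k) ((\<alpha>^^(n-1-k)) x)))"
      by (rule continuous_on_compose2[OF _ funpow_cont[OF cont]]) auto
  qed
  ultimately show ?thesis by simp
qed

lemma fs_rip_cont: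
  assumes "tp_wf U g n zs" "tp_wf U g n ws"
  shows "continuous_on UNIV (fs_rip U \<alpha> zs ws)"
  unfolding fs_rip_def
  using assms unfolding tp_wf_def
  by (intro cont_sum_list rip_el_cont) auto

lemma fs_rip_bdd:
  assumes "tp_wf U g n zs"
  shows "bdd_above (range (\<lambda>x. cmod (fs_rip U \<alpha> zs zs x)))"
proof -
  have "compact (range (fs_rip U \<alpha> zs zs))"
    by (rule compact_continuous_image[OF fs_rip_cont[OF assms assms] cpt])
  then obtain B where "\<forall>y\<in>range (fs_rip U \<alpha> zs zs). norm y \<le> B"
    using compact_imp_bounded bounded_iff by metis
  then show ?thesis by (intro bdd_aboveI[of _ B]) auto
qed

lemma Es_fib: "tp_wf U g n zs \<Longrightarrow> Es \<alpha> n zs x \<in> fib PU PG x"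
  by (rule sectionsD(1)[OF Es_sec])

lemma coord_le_ks0:
  assumes "tp_wf U g n zs"
  shows "cmod (Es \<alpha> n zs x ls) \<le> cmod (Es \<alpha> n zs x (ks0 x))"
proof (cases "x \<in> PU ls")
  case True
  have "Es \<alpha> n zs x ls = PG ls (ks0 x) x * Es \<alpha> n zs x (ks0 x)"
    by (rule fib_trans[OF Es_fib[OF assms] True ks0])
  then show ?thesis by (simp add: norm_mult PG_mod[OF True ks0])
next
  case False
  then show ?thesis by (simp add: fib_zero[OF Es_fib[OF assms] False])
qed

lemma coord_le:
  assumes "tp_wf U g n zs"
  shows "cmod (Es \<alpha> n zs x ls) \<le> fs_norm U \<alpha> zs"
proof -
  have "cmod (fs_rip U \<alpha> zs zs x) \<le> Sup (range (\<lambda>x. cmod (fs_rip U \<alpha> zs zs x)))"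
    by (rule cSup_upper[OF _ fs_rip_bdd[OF assms]]) simp
  then have "sqrt ((cmod (Es \<alpha> n zs x (ks0 x)))\<^sup>2) \<le> fs_norm U \<alpha> zs"
    unfolding fs_norm_def fs_rip_self[OF assms] by (rule real_sqrt_le_mono)
  then show ?thesis using coord_le_ks0[OF assms, of x ls] by simp
qed

lemma norm_le:
  assumes "tp_wf U g n zs" "\<And>x ls. cmod (Es \<alpha> n zs x ls) \<le> B"
  shows "fs_norm U \<alpha> zs \<le> B"
proof -
  have B0: "0 \<le> B" using assms(2)[of undefined undefined] norm_ge_zero order_trans by blast
  have "Sup (range (\<lambda>x. cmod (fs_rip U \<alpha> zs zs x))) \<le> B\<^sup>2"
  proof (rule cSup_least)
    fix y assume "y \<in> range (\<lambda>x. cmod (fs_rip U \<alpha> zs zs x))"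
    then obtain x where "y = (cmod (Es \<alpha> n zs x (ks0 x)))\<^sup>2" using fs_rip_self[OF assms(1)] by auto
    then show "y \<le> B\<^sup>2" using assms(2) by (simp add: power_mono)
  qed simp
  then have "fs_norm U \<alpha> zs \<le> sqrt (B\<^sup>2)" unfolding fs_norm_def by (rule real_sqrt_le_mono)
  then show ?thesis using B0 by simp
qed

end


context lb
begin

lemma wf_scale: "tp_wf U g n zs \<Longrightarrow> tp_wf U g n (fs_scale c zs)"
  unfolding tp_wf_def fs_scale_def by (auto split: list.splits intro!: sections_scale) (metis list.set_intros(2) subsetD)

lemma wf_append: "tp_wf U g n zs \<Longrightarrow> tp_wf U g n ws \<Longrightarrow> tp_wf U g n (zs @ ws)"
  unfolding tp_wf_def by auto

lemma wf_diff: "tp_wf U g n zs \<Longrightarrow> tp_wf U g n ws \<Longrightarrow> tp_wf U g n (fs_diff zs ws)"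
  unfolding fs_diff_def by (intro wf_append wf_scale)

lemma n_Suc: obtains m where "n = Suc m"
  using n1 by (cases n) auto

lemma elem_scale:
  assumes "length z = n"
  shows "elem_image \<alpha> n (case z of [] \<Rightarrow> [] | \<xi> # r \<Rightarrow> sec_scale c \<xi> # r) x ks = c * elem_image \<alpha> n z x ks"
proof -
  obtain m where m: "n = Suc m" by (rule n_Suc)
  then obtain \<xi> r where z: "z = \<xi> # r" using assms by (cases z) auto
  show ?thesis
    unfolding z list.case elem_image_eq m prod.lessThan_Suc_shift
    by (simp del: prod.lessThan_Suc add: sec_scale_def)
qed

lemma Es_scale:
  assumes "tp_wf U g n zs"
  shows "Es \<alpha> n (fs_scale c zs) x ks = c * Es \<alpha> n zs x ks"
proof -
  have "Es \<alpha> n (fs_scale c zs) x ks = (\<Sum>z\<leftarrow>zs. c * elem_image \<alpha> n z x ks)"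
    unfolding Es_def fs_scale_def map_map o_def
    by (intro arg_cong[where f=sum_list] map_cong refl elem_scale) (use assms in \<open>auto simp: tp_wf_def\<close>)
  then show ?thesis by (simp add: sum_list_const_mult Es_def)
qed

lemma Es_diff:
  assumes "tp_wf U g n zs" "tp_wf U g n ws"
  shows "Es \<alpha> n (fs_diff zs ws) x ks = Es \<alpha> n zs x ks - Es \<alpha> n ws x ks"
  unfolding fs_diff_def Es_append Es_scale[OF assms(2)] by simp

lemma elem_ract:
  assumes "length z = n"
  shows "elem_image \<alpha> n (butlast z @ [bm_ract (last z) f]) x ks = f x * elem_image \<alpha> n z x ks"
proof (cases "length ks = n")
  case True
  obtain m where m: "n = Suc m" by (rule n_Suc)
  have lb: "length (butlast z) = m" using assms m by simp
  have zk: "(butlast z @ [v]) ! k = z ! k" if "k < m" for k v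
    using that lb assms m by (simp add: nth_append nth_butlast)
  have zm: "(butlast z @ [v]) ! m = v" for v using lb by (simp add: nth_append)
  have "z \<noteq> []" using assms m by auto
  then have lz: "last z = z ! m" using assms m by (simp add: last_conv_nth)
  have "elem_image \<alpha> n (butlast z @ [bm_ract (last z) f]) x ks =
    (\<Prod>k<m. (z!k) ((\<alpha>^^(n-1-k)) x) (ks!k)) * (f x * (z!m) x (ks!m))"
    unfolding elem_image_eq m prod.lessThan_Suc using True m
    by (simp add: zk zm lz bm_ract_def)
  also have "\<dots> = f x * elem_image \<alpha> n z x ks"
    unfolding elem_image_eq m prod.lessThan_Suc using True m by simp
  finally show ?thesis .
qed (simp add: elem_image_eq)

lemma elem_lact:
  assumes "length z = n"
  shows "elem_image \<alpha> n (bm_lact \<alpha> f (hd z) # tl z) x ks = f ((\<alpha>^^n) x) * elem_image \<alpha> n z x ks"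
proof -
  obtain m where m: "n = Suc m" by (rule n_Suc)
  then obtain \<xi> r where z: "z = \<xi> # r" using assms by (cases z) auto
  have e: "\<alpha> ((\<alpha> ^^ m) x) = (\<alpha> ^^ Suc m) x" by simp
  show ?thesis
    unfolding z list.sel elem_image_eq m prod.lessThan_Suc_shift
    by (simp del: prod.lessThan_Suc funpow.simps add: bm_lact_def e)
qed

lemma Es_ract:
  assumes "tp_wf U g n zs"
  shows "Es \<alpha> n (fs_ract zs f) x ks = f x * Es \<alpha> n zs x ks"
proof -
  have "Es \<alpha> n (fs_ract zs f) x ks = (\<Sum>z\<leftarrow>zs. f x * elem_image \<alpha> n z x ks)"
    unfolding Es_def fs_ract_def map_map o_def
    by (intro arg_cong[where f=sum_list] map_cong refl elem_ract) (use assms in \<open>auto simp: tp_wf_def\<close>)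
  then show ?thesis by (simp add: sum_list_const_mult Es_def)
qed

lemma Es_lact:
  assumes "tp_wf U g n zs"
  shows "Es \<alpha> n (fs_lact \<alpha> f zs) x ks = f ((\<alpha>^^n) x) * Es \<alpha> n zs x ks"
proof -
  have "Es \<alpha> n (fs_lact \<alpha> f zs) x ks = (\<Sum>z\<leftarrow>zs. f ((\<alpha>^^n) x) * elem_image \<alpha> n z x ks)"
    unfolding Es_def fs_lact_def map_map o_def
    by (intro arg_cong[where f=sum_list] map_cong refl elem_lact) (use assms in \<open>auto simp: tp_wf_def\<close>)
  then show ?thesis by (simp add: sum_list_const_mult Es_def)
qed

end


context lb
begin

lemma cauchy_wf: "tp_cauchy U g \<alpha> n Z \<Longrightarrow> tp_wf U g n (Z k)"
  unfolding tp_cauchy_def by blast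

lemma fs_norm_nonneg: "tp_wf U g n zs \<Longrightarrow> 0 \<le> fs_norm U \<alpha> zs"
  using coord_le[of zs undefined undefined] norm_ge_zero order_trans by blast

lemma cauchy_unif:
  assumes "tp_cauchy U g \<alpha> n Z" "e > 0"
  shows "\<exists>N. \<forall>m\<ge>N. \<forall>k\<ge>N. \<forall>x ls. cmod (Es \<alpha> n (Z m) x ls - Es \<alpha> n (Z k) x ls) < e"
proof -
  from assms obtain N where N: "\<forall>m\<ge>N. \<forall>k\<ge>N. fs_norm U \<alpha> (fs_diff (Z m) (Z k)) < e"
    unfolding tp_cauchy_def by blast
  show ?thesis
  proof (intro exI[of _ N] allI impI)
    fix m k x ls assume mk: "m \<ge> N" "k \<ge> N"
    have "cmod (Es \<alpha> n (Z m) x ls - Es \<alpha> n (Z k) x ls) = cmod (Es \<alpha> n (fs_diff (Z m) (Z k)) x ls)"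
      by (simp add: Es_diff cauchy_wf[OF assms(1)])
    also have "\<dots> \<le> fs_norm U \<alpha> (fs_diff (Z m) (Z k))"
      by (rule coord_le[OF wf_diff[OF cauchy_wf[OF assms(1)] cauchy_wf[OF assms(1)]]])
    also have "\<dots> < e" using N mk by blast
    finally show "cmod (Es \<alpha> n (Z m) x ls - Es \<alpha> n (Z k) x ls) < e" .
  qed
qed

lemma psi_lim:
  assumes "tp_cauchy U g \<alpha> n Z"
  shows "(\<lambda>k. Es \<alpha> n (Z k) x ls) \<longlonglongrightarrow> Psi \<alpha> n Z x ls"
proof -
  have "Cauchy (\<lambda>k. Es \<alpha> n (Z k) x ls)"
    by (rule CauchyI) (use cauchy_unif[OF assms] in blast)
  then have "convergent (\<lambda>k. Es \<alpha> n (Z k) x ls)" by (simp add: Cauchy_convergent_iff)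
  then show ?thesis unfolding Psi_def by (simp add: convergent_LIMSEQ_iff)
qed

lemma psi_unif:
  assumes "tp_cauchy U g \<alpha> n Z" "e > 0"
  shows "\<exists>N. \<forall>k\<ge>N. \<forall>x ls. cmod (Es \<alpha> n (Z k) x ls - Psi \<alpha> n Z x ls) < e"
proof -
  obtain N where N: "\<forall>m\<ge>N. \<forall>k\<ge>N. \<forall>x ls. cmod (Es \<alpha> n (Z m) x ls - Es \<alpha> n (Z k) x ls) < e/2"
    using cauchy_unif[OF assms(1)] assms(2) half_gt_zero by blast
  have H: "cmod (Es \<alpha> n (Z k) x ls - Psi \<alpha> n Z x ls) \<le> e/2" if "k \<ge> N" for k x ls
  proof -
    have "(\<lambda>m. cmod (Es \<alpha> n (Z k) x ls - Es \<alpha> n (Z m) x ls)) \<longlonglongrightarrow> cmod (Es \<alpha> n (Z k) x ls - Psi \<alpha> n Z x ls)"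
      by (intro tendsto_intros psi_lim[OF assms(1)])
    then show ?thesis by (rule Lim_bounded[where M=N]) (use N that in \<open>auto intro: less_imp_le\<close>)
  qed
  have e2: "e/2 < e" using assms(2) by simp
  show ?thesis using H e2 by (intro exI[of _ N] allI impI) (blast intro: order_le_less_trans)
qed

lemma psi_sec:
  assumes "tp_cauchy U g \<alpha> n Z"
  shows "Psi \<alpha> n Z \<in> S"
proof (intro sectionsI fibI)
  fix x ks assume "x \<notin> PU ks"
  then have "\<forall>k. Es \<alpha> n (Z k) x ks = 0" using fib_zero[OF Es_fib[OF cauchy_wf[OF assms]]] by blast
  then show "Psi \<alpha> n Z x ks = 0" unfolding Psi_def by simp
next
  fix x ks ls assume "x \<in> PU ks" "x \<in> PU ls"
  then have e: "\<forall>k. Es \<alpha> n (Z k) x ks = PG ks ls x * Es \<alpha> n (Z k) x ls"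
    using fib_trans[OF Es_fib[OF cauchy_wf[OF assms]]] by blast
  have "(\<lambda>k. PG ks ls x * Es \<alpha> n (Z k) x ls) \<longlonglongrightarrow> PG ks ls x * Psi \<alpha> n Z x ls"
    by (intro tendsto_mult_left psi_lim[OF assms])
  then have "(\<lambda>k. Es \<alpha> n (Z k) x ks) \<longlonglongrightarrow> PG ks ls x * Psi \<alpha> n Z x ls"
    by (simp only: e[rule_format])
  then show "Psi \<alpha> n Z x ks = PG ks ls x * Psi \<alpha> n Z x ls"
    using psi_lim[OF assms] LIMSEQ_unique by blast
next
  fix ks
  show "continuous_on (PU ks) (\<lambda>x. Psi \<alpha> n Z x ks)"
  proof (rule uniform_limit_theorem[where F=sequentially and f="\<lambda>k x. Es \<alpha> n (Z k) x ks"])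
    show "\<forall>\<^sub>F k in sequentially. continuous_on (PU ks) (\<lambda>x. Es \<alpha> n (Z k) x ks)"
      by (intro always_eventually allI sectionsD(2)[OF Es_sec[OF cauchy_wf[OF assms]]])
    show "uniform_limit (PU ks) (\<lambda>k x. Es \<alpha> n (Z k) x ks) (\<lambda>x. Psi \<alpha> n Z x ks) sequentially"
      unfolding uniform_limit_sequentially_iff dist_norm using psi_unif[OF assms] by blast
  qed simp
qed

lemma Psi_iff:
  assumes Z: "tp_cauchy U g \<alpha> n Z" and W: "tp_cauchy U g \<alpha> n W"
  shows "Psi \<alpha> n Z = Psi \<alpha> n W \<longleftrightarrow> (\<lambda>k. fs_norm U \<alpha> (fs_diff (Z k) (W k))) \<longlonglongrightarrow> 0"
proof
  assume eq: "Psi \<alpha> n Z = Psi \<alpha> n W"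
  show "(\<lambda>k. fs_norm U \<alpha> (fs_diff (Z k) (W k))) \<longlonglongrightarrow> 0"
  proof (rule LIMSEQ_I)
    fix r :: real assume r: "0 < r"
    then have r3: "r/3 > 0" by simp
    obtain N1 where N1: "\<forall>k\<ge>N1. \<forall>x ls. cmod (Es \<alpha> n (Z k) x ls - Psi \<alpha> n Z x ls) < r/3"
      using psi_unif[OF Z r3] by blast
    obtain N2 where N2: "\<forall>k\<ge>N2. \<forall>x ls. cmod (Es \<alpha> n (W k) x ls - Psi \<alpha> n W x ls) < r/3"
      using psi_unif[OF W r3] by blast
    show "\<exists>no. \<forall>k\<ge>no. norm (fs_norm U \<alpha> (fs_diff (Z k) (W k)) - 0) < r"
    proof (intro exI[of _ "max N1 N2"] allI impI)
      fix k assume k: "max N1 N2 \<le> k"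
      have wf: "tp_wf U g n (fs_diff (Z k) (W k))" by (intro wf_diff cauchy_wf Z W)
      have "fs_norm U \<alpha> (fs_diff (Z k) (W k)) \<le> r/3 + r/3"
      proof (rule norm_le[OF wf])
        fix x ls
        have "Es \<alpha> n (fs_diff (Z k) (W k)) x ls =
          (Es \<alpha> n (Z k) x ls - Psi \<alpha> n Z x ls) - (Es \<alpha> n (W k) x ls - Psi \<alpha> n W x ls)"
          using eq by (simp add: Es_diff cauchy_wf[OF Z] cauchy_wf[OF W])
        also have "cmod \<dots> \<le> cmod (Es \<alpha> n (Z k) x ls - Psi \<alpha> n Z x ls) + cmod (Es \<alpha> n (W k) x ls - Psi \<alpha> n W x ls)"
          by (rule norm_triangle_ineq4)
        finally show "cmod (Es \<alpha> n (fs_diff (Z k) (W k)) x ls) \<le> r/3 + r/3"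
          using N1 N2 k by (smt (verit) max.bounded_iff)
      qed
      then show "norm (fs_norm U \<alpha> (fs_diff (Z k) (W k)) - 0) < r"
        using fs_norm_nonneg[OF wf] r by simp
    qed
  qed
next
  assume lim: "(\<lambda>k. fs_norm U \<alpha> (fs_diff (Z k) (W k))) \<longlonglongrightarrow> 0"
  show "Psi \<alpha> n Z = Psi \<alpha> n W"
  proof (intro ext)
    fix x ls
    have a: "(\<lambda>k. Es \<alpha> n (Z k) x ls - Es \<alpha> n (W k) x ls) \<longlonglongrightarrow> Psi \<alpha> n Z x ls - Psi \<alpha> n W x ls"
      by (intro tendsto_diff psi_lim Z W)
    have "(\<lambda>k. Es \<alpha> n (Z k) x ls - Es \<alpha> n (W k) x ls) \<longlonglongrightarrow> 0"
    proof (rule Lim_null_comparison[OF _ lim])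
      show "\<forall>\<^sub>F k in sequentially. norm (Es \<alpha> n (Z k) x ls - Es \<alpha> n (W k) x ls) \<le> fs_norm U \<alpha> (fs_diff (Z k) (W k))"
      proof (intro always_eventually allI)
        fix k
        have "Es \<alpha> n (Z k) x ls - Es \<alpha> n (W k) x ls = Es \<alpha> n (fs_diff (Z k) (W k)) x ls"
          by (simp add: Es_diff cauchy_wf[OF Z] cauchy_wf[OF W])
        then show "norm (Es \<alpha> n (Z k) x ls - Es \<alpha> n (W k) x ls) \<le> fs_norm U \<alpha> (fs_diff (Z k) (W k))"
          using coord_le[OF wf_diff[OF cauchy_wf[OF Z] cauchy_wf[OF W]]] by simp
      qed
    qed
    with a have "Psi \<alpha> n Z x ls - Psi \<alpha> n W x ls = 0" using LIMSEQ_unique by blast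
    then show "Psi \<alpha> n Z x ls = Psi \<alpha> n W x ls" by simp
  qed
qed

end


lemma uc_mult:
  fixes a b :: "nat \<Rightarrow> 'x \<Rightarrow> complex"
  assumes ua: "\<forall>e>0. \<exists>N. \<forall>k\<ge>N. \<forall>x. cmod (a k x - A x) < e"
    and ub: "\<forall>e>0. \<exists>N. \<forall>k\<ge>N. \<forall>x. cmod (b k x - B x) < e"
    and bA: "\<And>x. cmod (A x) \<le> Ca" and bB: "\<And>x. cmod (B x) \<le> Cb"
  shows "unif_conv (\<lambda>k x. cnj (a k x) * b k x) (\<lambda>x. cnj (A x) * B x)"
  unfolding unif_conv_def
proof (intro allI impI)
  fix e :: real assume e: "e > 0"
  have Ca0: "0 \<le> Ca" using bA[of undefined] norm_ge_zero order_trans by blast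
  have Cb0: "0 \<le> Cb" using bB[of undefined] norm_ge_zero order_trans by blast
  define d where "d = min 1 (e / (2 * (Ca + Cb + 1)))"
  have pos: "0 < 2 * (Ca + Cb + 1)" using Ca0 Cb0 by simp
  have d0: "d > 0" unfolding d_def using e pos by simp
  have d1: "d \<le> 1" unfolding d_def by simp
  have "d * (Ca + Cb + 1) \<le> e / (2 * (Ca + Cb + 1)) * (Ca + Cb + 1)"
    unfolding d_def using Ca0 Cb0 by (intro mult_right_mono) auto
  also have "\<dots> = e / 2" using pos by (simp add: field_simps)
  finally have d2: "d * (Ca + Cb + 1) < e" using e by simp
  obtain N1 where N1: "\<forall>k\<ge>N1. \<forall>x. cmod (a k x - A x) < d" using ua d0 by blast
  obtain N2 where N2: "\<forall>k\<ge>N2. \<forall>x. cmod (b k x - B x) < d" using ub d0 by blast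
  show "\<exists>N. \<forall>k\<ge>N. \<forall>x. cmod (cnj (a k x) * b k x - cnj (A x) * B x) < e"
  proof (intro exI[of _ "max N1 N2"] allI impI)
    fix k x assume k: "max N1 N2 \<le> k"
    have ia: "cmod (a k x - A x) < d" using N1 k by simp
    have ib: "cmod (b k x - B x) < d" using N2 k by simp
    have "cmod (b k x) \<le> cmod (B x) + cmod (b k x - B x)"
      using norm_triangle_ineq[of "B x" "b k x - B x"] by simp
    then have nb: "cmod (b k x) \<le> Cb + 1" using bB[of x] ib d1 by linarith
    have "cnj (a k x) * b k x - cnj (A x) * B x = cnj (a k x - A x) * b k x + cnj (A x) * (b k x - B x)"
      by (simp add: algebra_simps)
    moreover have "cmod (cnj (a k x) - cnj (A x)) = cmod (a k x - A x)" by (metis complex_cnj_diff complex_mod_cnj)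
    ultimately have "cmod (cnj (a k x) * b k x - cnj (A x) * B x) \<le> cmod (a k x - A x) * cmod (b k x) + cmod (A x) * cmod (b k x - B x)"
      using norm_triangle_ineq[of "cnj (a k x - A x) * b k x" "cnj (A x) * (b k x - B x)"]
      by (simp add: norm_mult)
    also have "\<dots> \<le> d * (Cb + 1) + Ca * d"
    proof (rule add_mono)
      show "cmod (a k x - A x) * cmod (b k x) \<le> d * (Cb + 1)"
        by (rule mult_mono) (use ia nb Cb0 d0 in auto)
      show "cmod (A x) * cmod (b k x - B x) \<le> Ca * d"
        by (rule mult_mono) (use ib bA[of x] Ca0 in auto)
    qed
    also have "\<dots> = d * (Ca + Cb + 1)" by (simp add: algebra_simps)
    finally show "cmod (cnj (a k x) * b k x - cnj (A x) * B x) < e" using d2 by linarith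
  qed
qed

lemma sum_list_swap:
  "(\<Sum>z\<leftarrow>zs. \<Sum>w\<leftarrow>ws. f z w) = (\<Sum>w\<leftarrow>ws. \<Sum>z\<leftarrow>zs. (f z w :: complex))"
  by (induction zs) (simp_all add: sum_list_addf)

context lb
begin

lemma Psi_add:
  assumes Z: "tp_cauchy U g \<alpha> n Z" and W: "tp_cauchy U g \<alpha> n W"
  shows "Psi \<alpha> n (\<lambda>k. Z k @ W k) = sec_add (Psi \<alpha> n Z) (Psi \<alpha> n W)"
proof (intro ext)
  fix x ks
  have "(\<lambda>k. Es \<alpha> n (Z k @ W k) x ks) \<longlonglongrightarrow> Psi \<alpha> n Z x ks + Psi \<alpha> n W x ks"
    unfolding Es_append by (intro tendsto_add psi_lim Z W)
  then show "Psi \<alpha> n (\<lambda>k. Z k @ W k) x ks = sec_add (Psi \<alpha> n Z) (Psi \<alpha> n W) x ks"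
    unfolding sec_add_def Psi_def[of \<alpha> n "\<lambda>k. Z k @ W k"] by (rule limI)
qed

lemma Psi_scale:
  assumes Z: "tp_cauchy U g \<alpha> n Z"
  shows "Psi \<alpha> n (\<lambda>k. fs_scale c (Z k)) = sec_scale c (Psi \<alpha> n Z)"
proof (intro ext)
  fix x ks
  have "(\<lambda>k. Es \<alpha> n (fs_scale c (Z k)) x ks) \<longlonglongrightarrow> c * Psi \<alpha> n Z x ks"
    unfolding Es_scale[OF cauchy_wf[OF Z]] by (intro tendsto_mult_left psi_lim Z)
  then show "Psi \<alpha> n (\<lambda>k. fs_scale c (Z k)) x ks = sec_scale c (Psi \<alpha> n Z) x ks"
    unfolding sec_scale_def Psi_def[of \<alpha> n "\<lambda>k. fs_scale c (Z k)"] by (rule limI)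
qed

lemma Psi_ract:
  assumes Z: "tp_cauchy U g \<alpha> n Z"
  shows "Psi \<alpha> n (\<lambda>k. fs_ract (Z k) f) = bm_ract (Psi \<alpha> n Z) f"
proof (intro ext)
  fix x ks
  have "(\<lambda>k. Es \<alpha> n (fs_ract (Z k) f) x ks) \<longlonglongrightarrow> f x * Psi \<alpha> n Z x ks"
    unfolding Es_ract[OF cauchy_wf[OF Z]] by (intro tendsto_mult_left psi_lim Z)
  then show "Psi \<alpha> n (\<lambda>k. fs_ract (Z k) f) x ks = bm_ract (Psi \<alpha> n Z) f x ks"
    unfolding bm_ract_def Psi_def[of \<alpha> n "\<lambda>k. fs_ract (Z k) f"] by (rule limI)
qed

lemma Psi_lact:
  assumes Z: "tp_cauchy U g \<alpha> n Z"
  shows "Psi \<alpha> n (\<lambda>k. fs_lact \<alpha> f (Z k)) = bm_lact (\<alpha> ^^ n) f (Psi \<alpha> n Z)"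
proof (intro ext)
  fix x ks
  have "(\<lambda>k. Es \<alpha> n (fs_lact \<alpha> f (Z k)) x ks) \<longlonglongrightarrow> f ((\<alpha>^^n) x) * Psi \<alpha> n Z x ks"
    unfolding Es_lact[OF cauchy_wf[OF Z]] by (intro tendsto_mult_left psi_lim Z)
  then show "Psi \<alpha> n (\<lambda>k. fs_lact \<alpha> f (Z k)) x ks = bm_lact (\<alpha> ^^ n) f (Psi \<alpha> n Z) x ks"
    unfolding bm_lact_def Psi_def[of \<alpha> n "\<lambda>k. fs_lact \<alpha> f (Z k)"] by (rule limI)
qed

lemma Psi_const: "Psi \<alpha> n (\<lambda>k. zs) = Es \<alpha> n zs"
  unfolding Psi_def by simp

lemma psi_bdd:
  assumes Z: "tp_cauchy U g \<alpha> n Z"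
  shows "\<exists>C. \<forall>x ls. cmod (Psi \<alpha> n Z x ls) \<le> C"
proof -
  obtain N where N: "\<forall>k\<ge>N. \<forall>x ls. cmod (Es \<alpha> n (Z k) x ls - Psi \<alpha> n Z x ls) < 1"
    using psi_unif[OF Z, of 1] by auto
  have "cmod (Psi \<alpha> n Z x ls) \<le> fs_norm U \<alpha> (Z N) + 1" for x ls
  proof -
    have "cmod (Psi \<alpha> n Z x ls) \<le> cmod (Es \<alpha> n (Z N) x ls) + cmod (Es \<alpha> n (Z N) x ls - Psi \<alpha> n Z x ls)"
      using norm_triangle_ineq4[of "Es \<alpha> n (Z N) x ls" "Es \<alpha> n (Z N) x ls - Psi \<alpha> n Z x ls"] by simp
    moreover have "cmod (Es \<alpha> n (Z N) x ls - Psi \<alpha> n Z x ls) < 1" using N by simp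
    ultimately show ?thesis using coord_le[OF cauchy_wf[OF Z], of N x ls] by linarith
  qed
  then show ?thesis by blast
qed

lemma rip_conv:
  assumes Z: "tp_cauchy U g \<alpha> n Z" and W: "tp_cauchy U g \<alpha> n W"
  shows "unif_conv (\<lambda>k. fs_rip U \<alpha> (Z k) (W k)) (bm_rip PU (Psi \<alpha> n Z) (Psi \<alpha> n W))"
proof -
  have e1: "(\<lambda>k. fs_rip U \<alpha> (Z k) (W k)) = (\<lambda>k x. cnj (Es \<alpha> n (Z k) x (ks0 x)) * Es \<alpha> n (W k) x (ks0 x))"
    by (intro ext fs_rip_eq cauchy_wf Z W)
  have e2: "bm_rip PU (Psi \<alpha> n Z) (Psi \<alpha> n W) = (\<lambda>x. cnj (Psi \<alpha> n Z x (ks0 x)) * Psi \<alpha> n W x (ks0 x))"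
    unfolding bm_rip_def fip_pow ..
  obtain C1 where C1: "\<forall>x ls. cmod (Psi \<alpha> n Z x ls) \<le> C1" using psi_bdd[OF Z] by blast
  obtain C2 where C2: "\<forall>x ls. cmod (Psi \<alpha> n W x ls) \<le> C2" using psi_bdd[OF W] by blast
  show ?thesis unfolding e1 e2
  proof (rule uc_mult)
    show "\<forall>e>0. \<exists>N. \<forall>k\<ge>N. \<forall>x. cmod (Es \<alpha> n (Z k) x (ks0 x) - Psi \<alpha> n Z x (ks0 x)) < e"
      using psi_unif[OF Z] by blast
    show "\<forall>e>0. \<exists>N. \<forall>k\<ge>N. \<forall>x. cmod (Es \<alpha> n (W k) x (ks0 x) - Psi \<alpha> n W x (ks0 x)) < e"
      using psi_unif[OF W] by blast
    show "\<And>x. cmod (Psi \<alpha> n Z x (ks0 x)) \<le> C1" using C1 by blast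
    show "\<And>x. cmod (Psi \<alpha> n W x (ks0 x)) \<le> C2" using C2 by blast
  qed
qed

lemma funpow_inv_shift: "(\<alpha> ^^ a) ((inv \<alpha> ^^ (a + b)) x) = (inv \<alpha> ^^ b) x"
proof -
  have "(\<alpha> ^^ a) ((inv \<alpha> ^^ (a + b)) x) = (\<alpha> ^^ a) ((inv \<alpha> ^^ a) ((inv \<alpha> ^^ b) x))"
    by (simp add: funpow_add)
  also have "\<dots> = (inv \<alpha> ^^ b) x" using fn_o_inv_fn_is_id[OF bij, of a] by (simp add: fun_eq_iff)
  finally show ?thesis .
qed

lemma lip_el_rip:
  assumes "length z = n" "length w = n"
  shows "lip_el U \<alpha> z w x = rip_el U \<alpha> w z ((inv \<alpha> ^^ n) x)"
proof -
  have sh: "(\<alpha> ^^ (n - Suc k)) ((inv \<alpha> ^^ n) x) = (inv \<alpha> ^^ Suc k) x" if "k < n" for k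
    using funpow_inv_shift[of "n - Suc k" "Suc k" x] that by simp
  have "lip_el U \<alpha> z w x = (\<Prod>k<n. fip U ((inv \<alpha> ^^ Suc k) x) ((w!k) ((inv \<alpha> ^^ Suc k) x)) ((z!k) ((inv \<alpha> ^^ Suc k) x)))"
    using lip_el_prod[of z w U \<alpha> x] assms by simp
  also have "\<dots> = (\<Prod>k<n. fip U ((\<alpha> ^^ (n-1-k)) ((inv \<alpha> ^^ n) x)) ((w!k) ((\<alpha> ^^ (n-1-k)) ((inv \<alpha> ^^ n) x))) ((z!k) ((\<alpha> ^^ (n-1-k)) ((inv \<alpha> ^^ n) x))))"
    by (rule prod.cong[OF refl]) (simp add: sh)
  also have "\<dots> = rip_el U \<alpha> w z ((inv \<alpha> ^^ n) x)"
    using rip_el_prod[of w z U \<alpha> "(inv \<alpha> ^^ n) x"] assms by simp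
  finally show ?thesis .
qed

lemma lip_conv:
  assumes Z: "tp_cauchy U g \<alpha> n Z" and W: "tp_cauchy U g \<alpha> n W"
  shows "unif_conv (\<lambda>k. fs_lip U \<alpha> (Z k) (W k)) (bm_lip PU (\<alpha> ^^ n) (Psi \<alpha> n Z) (Psi \<alpha> n W))"
proof -
  have e1: "fs_lip U \<alpha> (Z k) (W k) x = fs_rip U \<alpha> (W k) (Z k) ((inv \<alpha> ^^ n) x)" for k x
  proof -
    have "fs_lip U \<alpha> (Z k) (W k) x = (\<Sum>z\<leftarrow>Z k. \<Sum>w\<leftarrow>W k. rip_el U \<alpha> w z ((inv \<alpha> ^^ n) x))"
      unfolding fs_lip_def
    proof (intro arg_cong[where f=sum_list] map_cong refl lip_el_rip)
      fix z w assume "z \<in> set (Z k)" "w \<in> set (W k)"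
      then show "length z = n" "length w = n"
        using cauchy_wf[OF Z, of k] cauchy_wf[OF W, of k] unfolding tp_wf_def by auto
    qed
    also have "\<dots> = fs_rip U \<alpha> (W k) (Z k) ((inv \<alpha> ^^ n) x)"
      unfolding fs_rip_def by (rule sum_list_swap)
    finally show ?thesis .
  qed
  have e2: "bm_lip PU (\<alpha>^^n) (Psi \<alpha> n Z) (Psi \<alpha> n W) x = bm_rip PU (Psi \<alpha> n W) (Psi \<alpha> n Z) ((inv \<alpha> ^^ n) x)" for x
    unfolding bm_lip_def bm_rip_def inv_fn[OF bij] ..
  show ?thesis using rip_conv[OF W Z] unfolding unif_conv_def e1 e2 by blast
qed

end




lemma sum_list_concat': "sum_list (concat xss) = sum_list (map sum_list xss)"
  by (induction xss) simp_all

lemma prod_sum_nlists: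
  fixes h :: "nat \<Rightarrow> 'j \<Rightarrow> real"
  shows "(\<Sum>js\<leftarrow>List.n_lists m xs. \<Prod>k<m. h k (js!k)) = (\<Prod>k<m. \<Sum>j\<leftarrow>xs. h k j)"
proof (induction m arbitrary: h)
  case 0 then show ?case by simp
next
  case (Suc m)
  have "(\<Sum>js\<leftarrow>List.n_lists (Suc m) xs. \<Prod>k<Suc m. h k (js!k)) =
    (\<Sum>ys\<leftarrow>List.n_lists m xs. \<Sum>y\<leftarrow>xs. h 0 y * (\<Prod>k<m. h (Suc k) (ys!k)))"
    by (simp add: sum_list_concat' map_concat o_def prod.lessThan_Suc_shift del: prod.lessThan_Suc)
  also have "\<dots> = (\<Sum>ys\<leftarrow>List.n_lists m xs. (\<Sum>y\<leftarrow>xs. h 0 y) * (\<Prod>k<m. h (Suc k) (ys!k)))"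
    by (simp add: sum_list_mult_const)
  also have "\<dots> = (\<Sum>y\<leftarrow>xs. h 0 y) * (\<Sum>ys\<leftarrow>List.n_lists m xs. \<Prod>k<m. h (Suc k) (ys!k))"
    by (simp add: sum_list_const_mult)
  also have "\<dots> = (\<Sum>y\<leftarrow>xs. h 0 y) * (\<Prod>k<m. \<Sum>j\<leftarrow>xs. h (Suc k) j)"
    using Suc.IH[of "\<lambda>k. h (Suc k)"] by simp
  also have "\<dots> = (\<Prod>k<Suc m. \<Sum>j\<leftarrow>xs. h k j)"
    by (simp only: prod.lessThan_Suc_shift)
  finally show ?case .
qed



context lb
begin

lemma loc_sec:
  assumes "continuous_on UNIV \<phi>" "closed K" "K \<subseteq> U i0" "\<And>y. y \<notin> K \<Longrightarrow> \<phi> y = 0"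
  shows "(\<lambda>y i. if y \<in> U i \<and> y \<in> U i0 then \<phi> y * g i i0 y else 0) \<in> sections U g"
proof (intro sectionsI fibI)
  fix y i assume "y \<notin> U i" then show "(if y \<in> U i \<and> y \<in> U i0 then \<phi> y * g i i0 y else 0) = 0" by simp
next
  fix y i j assume ij: "y \<in> U i" "y \<in> U j"
  show "(if y \<in> U i \<and> y \<in> U i0 then \<phi> y * g i i0 y else 0) =
        g i j y * (if y \<in> U j \<and> y \<in> U i0 then \<phi> y * g j i0 y else 0)"
  proof (cases "y \<in> U i0")
    case True
    then have "g i j y * g j i0 y = g i i0 y" using cf(5) ij by blast
    then show ?thesis using True ij by (simp add: algebra_simps)
  next
    case False
    then have "\<phi> y = 0" using assms(3,4) by blast
    then show ?thesis by simp
  qed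
next
  fix i
  have c1: "continuous_on (U i \<inter> U i0) (\<lambda>y. if y \<in> U i \<and> y \<in> U i0 then \<phi> y * g i i0 y else 0)"
  proof (rule continuous_on_cong[THEN iffD1, OF refl _ continuous_on_mult])
    show "continuous_on (U i \<inter> U i0) \<phi>" using assms(1) by (rule continuous_on_subset) simp
    show "continuous_on (U i \<inter> U i0) (g i i0)" by (rule cf(6))
  qed simp
  have c2: "continuous_on (U i - K) (\<lambda>y. if y \<in> U i \<and> y \<in> U i0 then \<phi> y * g i i0 y else 0)"
    by (rule continuous_on_cong[THEN iffD1, OF refl _ continuous_on_const]) (use assms(4) in auto)
  have "continuous_on ((U i \<inter> U i0) \<union> (U i - K)) (\<lambda>y. if y \<in> U i \<and> y \<in> U i0 then \<phi> y * g i i0 y else 0)"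
    by (rule continuous_on_open_Un[OF _ _ c1 c2]) (use cf(1) assms(2) in auto)
  moreover have "(U i \<inter> U i0) \<union> (U i - K) = U i" using assms(3) by blast
  ultimately show "continuous_on (U i) (\<lambda>y. if y \<in> U i \<and> y \<in> U i0 then \<phi> y * g i i0 y else 0)" by simp
qed

end


context lb begin
lemma pou:
  "\<exists>(Ps :: 'a list) (chi :: 'a \<Rightarrow> 'a \<Rightarrow> real) (C :: 'a \<Rightarrow> 'a set) (c :: 'a \<Rightarrow> 'i).
    (\<forall>j. continuous_on UNIV (chi j)) \<and> (\<forall>j y. 0 \<le> chi j y) \<and> (\<forall>j. closed (C j)) \<and>
    (\<forall>j. C j \<subseteq> U (c j)) \<and> (\<forall>j y. y \<notin> C j \<longrightarrow> chi j y = 0) \<and> (\<forall>y. (\<Sum>j\<leftarrow>Ps. chi j y) = 1)"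
proof -
  define c where "c p = (SOME i. p \<in> U i)" for p
  have cp: "p \<in> U (c p)" for p unfolding c_def using cf(2) by (rule someI_ex)
  have ex: "\<forall>p. \<exists>e. e > 0 \<and> ball p e \<subseteq> U (c p)"
  proof
    fix p
    obtain e where "e > 0" "ball p e \<subseteq> U (c p)" using openE[OF cf(1) cp] .
    then show "\<exists>e. e > 0 \<and> ball p e \<subseteq> U (c p)" by blast
  qed
  obtain r0 where "\<forall>p. r0 p > 0 \<and> ball p (r0 p) \<subseteq> U (c p)" using choice[OF ex] by blast
  then have r0: "\<And>p. r0 p > 0" "\<And>p. ball p (r0 p) \<subseteq> U (c p)" by auto
  define r where "r p = r0 p / 2" for p
  have r: "r p > 0" for p unfolding r_def using r0(1) by simp
  have Cs: "cball p (r p) \<subseteq> U (c p)" for p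
  proof -
    have "cball p (r p) \<subseteq> ball p (r0 p)" unfolding r_def using r0(1)[of p] by (auto simp: subset_eq)
    then show ?thesis using r0(2) by blast
  qed
  have cov: "UNIV \<subseteq> (\<Union>p\<in>UNIV. ball p (r p))" using r by auto
  obtain P where P0: "P \<subseteq> UNIV" and P: "finite P" "UNIV \<subseteq> (\<Union>p\<in>P. ball p (r p))"
    by (rule compactE_image[OF cpt _ cov]) simp
  obtain Ps where Ps: "set Ps = P" "distinct Ps" using finite_distinct_list[OF P(1)] by blast
  define \<theta> where "\<theta> p y = max 0 (r p - dist y p)" for p y
  define s where "s y = (\<Sum>p\<in>P. \<theta> p y)" for y
  have th0: "0 \<le> \<theta> p y" for p y unfolding \<theta>_def by simp
  have spos: "s y > 0" for y
  proof -
    obtain p where p: "p \<in> P" "y \<in> ball p (r p)" using P(2) by blast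
    then have "\<theta> p y > 0" unfolding \<theta>_def by (simp add: dist_commute)
    also have "\<theta> p y \<le> s y" unfolding s_def using p(1) P(1) th0 by (intro member_le_sum) auto
    finally show ?thesis .
  qed
  define chi where "chi p y = \<theta> p y / s y" for p y
  have thc: "continuous_on UNIV (\<theta> p)" for p
    unfolding \<theta>_def by (intro continuous_on_max continuous_on_diff continuous_on_const continuous_on_dist continuous_on_id)
  have sc: "continuous_on UNIV s" unfolding s_def by (intro continuous_on_sum thc)
  have f1: "\<forall>j. continuous_on UNIV (chi j)"
    unfolding chi_def using spos by (intro allI continuous_on_divide thc sc) (metis less_irrefl)
  have f2: "\<forall>j y. 0 \<le> chi j y" unfolding chi_def using th0 spos by (simp add: less_imp_le)
  have f3: "\<forall>j. closed (cball j (r j))" by simp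
  have f4: "\<forall>j. cball j (r j) \<subseteq> U (c j)" using Cs by blast
  have f5: "\<forall>j y. y \<notin> cball j (r j) \<longrightarrow> chi j y = 0" unfolding chi_def \<theta>_def by (simp add: dist_commute)
  have f6: "\<forall>y. (\<Sum>j\<leftarrow>Ps. chi j y) = 1"
  proof
    fix y
    have "(\<Sum>j\<leftarrow>Ps. chi j y) = (\<Sum>j\<in>P. chi j y)" using Ps by (simp add: sum_list_distinct_conv_sum_set)
    also have "\<dots> = s y / s y" unfolding chi_def s_def by (simp only: sum_divide_distrib)
    also have "\<dots> = 1" using spos[of y] by simp
    finally show "(\<Sum>j\<leftarrow>Ps. chi j y) = 1" .
  qed
  show ?thesis
    by (rule exI[of _ Ps], rule exI[of _ chi], rule exI[of _ "\<lambda>p. cball p (r p)"], rule exI[of _ c])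
       (intro conjI f1 f2 f3 f4 f5 f6)
qed

end




lemma sum_list_ofreal:
  "(\<Sum>x\<leftarrow>xs. c * complex_of_real (f x)) = c * complex_of_real (\<Sum>x\<leftarrow>xs. f x)"
  by (induction xs) (simp_all add: distrib_left)

context lb
begin

lemma surj:
  assumes eta: "\<eta> \<in> S"
  shows "\<exists>zs. tp_wf U g n zs \<and> Es \<alpha> n zs = \<eta>"
proof -
  obtain Ps :: "'a list" and chi :: "'a \<Rightarrow> 'a \<Rightarrow> real" and C :: "'a \<Rightarrow> 'a set" and c :: "'a \<Rightarrow> 'i" where H: "(\<forall>j. continuous_on UNIV (chi j)) \<and> (\<forall>j y. 0 \<le> chi j y) \<and> (\<forall>j. closed (C j)) \<and>
    (\<forall>j. C j \<subseteq> U (c j)) \<and> (\<forall>j y. y \<notin> C j \<longrightarrow> chi j y = 0) \<and> (\<forall>y. (\<Sum>j\<leftarrow>Ps. chi j y) = 1)"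
    using pou by blast
  have chc: "\<And>j. continuous_on UNIV (chi j)" and ch0: "\<And>j y. 0 \<le> chi j y"
    and Ccl: "\<And>j. closed (C j)" and CU: "\<And>j. C j \<subseteq> U (c j)"
    and chz: "\<And>j y. y \<notin> C j \<Longrightarrow> chi j y = 0" and ch1: "\<And>y. (\<Sum>j\<leftarrow>Ps. chi j y) = 1"
    using H by blast+
  obtain m where m: "n = Suc m" by (rule n_Suc)
  define lam where "lam j y = sqrt (chi j y)" for j y
  define A where "A k = \<alpha> ^^ (n - 1 - k)" for k
  define R where "R js y = chi (js!m) y * (\<Prod>k<m. lam (js!k) (A k y))" for js y
  define Lf where "Lf js y = \<eta> y (map c js) * complex_of_real (R js y)" for js y
  define phi where "phi js k = (if k = m then Lf js else (\<lambda>y. complex_of_real (lam (js!k) y)))" for js k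
  define lsec where "lsec i0 \<phi> = (\<lambda>y i. if y \<in> U i \<and> y \<in> U i0 then \<phi> y * g i i0 y else 0)" for i0 \<phi>
  define T where "T js = map (\<lambda>k. lsec (c (js!k)) (phi js k)) [0..<n]" for js
  define rho where "rho js x = (\<Prod>k<n. chi (js!k) (A k x))" for js x
  define zs where "zs = map T (List.n_lists n Ps)"

  have lamc: "continuous_on UNIV (lam j)" for j unfolding lam_def by (intro continuous_on_real_sqrt chc)
  have lamz: "y \<notin> C j \<Longrightarrow> lam j y = 0" for j y by (simp add: lam_def chz)
  have lam2: "lam j y * lam j y = chi j y" for j y using ch0[of j y] by (simp add: lam_def)
  have Ac: "continuous_on UNIV (A k)" for k unfolding A_def by (rule funpow_cont[OF cont])
  have Am: "A m x = x" for x using m by (simp add: A_def)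
  have Rc: "continuous_on UNIV (R js)" for js
    unfolding R_def
    by (intro continuous_on_mult chc continuous_on_prod continuous_on_compose2[OF lamc Ac]) auto

  have Lfc: "continuous_on UNIV (Lf js)" if len: "length js = n" for js
  proof -
    define K where "K = (\<Inter>k\<in>{..<n}. A k -` C (js!k))"
    have Kc: "closed K" unfolding K_def by (intro closed_INT ballI closed_vimage[OF Ccl Ac])
    have KP: "K \<subseteq> PU (map c js)"
    proof
      fix y assume "y \<in> K"
      then have "\<forall>k<n. A k y \<in> C (js!k)" unfolding K_def by auto
      then have "\<forall>k<n. (\<alpha> ^^ (n - 1 - k)) y \<in> U (map c js ! k)" using CU len unfolding A_def by (auto simp: subset_eq)
      then show "y \<in> PU (map c js)" unfolding pow_U_def using len by simp
    qed
    have LK: "Lf js y = 0" if "y \<notin> K" for y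
    proof -
      from that obtain k where k: "k < n" "A k y \<notin> C (js!k)" unfolding K_def by auto
      have "R js y = 0"
      proof (cases "k = m")
        case True
        then have "chi (js!m) y = 0" using k Am chz by metis
        then show ?thesis unfolding R_def by simp
      next
        case False
        then have "k < m" using k m by simp
        moreover have "lam (js!k) (A k y) = 0" by (rule lamz[OF k(2)])
        ultimately have "(\<Prod>k<m. lam (js!k) (A k y)) = 0" by (intro prod_zero) auto
        then show ?thesis unfolding R_def by simp
      qed
      then show ?thesis unfolding Lf_def by simp
    qed
    have c1: "continuous_on (PU (map c js)) (Lf js)"
      unfolding Lf_def
      by (intro continuous_on_mult sectionsD(2)[OF eta] continuous_on_of_real continuous_on_subset[OF Rc]) simp
    have c2: "continuous_on (- K) (Lf js)"
      by (rule continuous_on_cong[THEN iffD1, OF refl _ continuous_on_const]) (use LK in auto)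
    have "continuous_on (PU (map c js) \<union> - K) (Lf js)"
      by (rule continuous_on_open_Un[OF PU_open _ c1 c2]) (use Kc in auto)
    moreover have "PU (map c js) \<union> - K = UNIV" using KP by blast
    ultimately show ?thesis by simp
  qed

  have phic: "continuous_on UNIV (phi js k)" if "length js = n" for js k
    unfolding phi_def using Lfc[OF that] by (auto intro: continuous_on_of_real lamc)
  have phiz: "phi js k y = 0" if "y \<notin> C (js!k)" "k < n" for js k y
  proof (cases "k = m")
    case True
    then have "chi (js!m) y = 0" using that chz by metis
    then show ?thesis unfolding phi_def Lf_def R_def using True by simp
  next
    case False
    then show ?thesis unfolding phi_def using lamz[OF that(1)] by simp
  qed

  have Tsec: "set (T js) \<subseteq> sections U g" "length (T js) = n" if len: "length js = n" for js
  proof -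
    show "length (T js) = n" unfolding T_def by simp
    show "set (T js) \<subseteq> sections U g"
    proof
      fix z assume "z \<in> set (T js)"
      then obtain k where k: "k < n" "z = lsec (c (js!k)) (phi js k)" unfolding T_def by auto
      show "z \<in> sections U g" unfolding k(2) lsec_def
        by (rule loc_sec[OF phic[OF len] Ccl CU phiz]) (use k in auto)
    qed
  qed

  have elem_T: "elem_image \<alpha> n (T js) x ls = \<eta> x ls * complex_of_real (rho js x)"
    if len: "length js = n" for js x ls
  proof (cases "length ls = n")
    case False
    then have "x \<notin> PU ls" using PU_len by blast
    then have "\<eta> x ls = 0" by (rule fib_zero[OF sectionsD(1)[OF eta]])
    then show ?thesis using False by (simp add: elem_image_eq)
  next
    case lenl: True
    have Tk: "T js ! k = lsec (c (js!k)) (phi js k)" if "k < n" for k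
      using that unfolding T_def by simp
    have E: "elem_image \<alpha> n (T js) x ls = (\<Prod>k<n. lsec (c (js!k)) (phi js k) (A k x) (ls!k))"
      unfolding elem_image_eq using lenl by (auto intro!: prod.cong simp: Tk A_def)
    show ?thesis
    proof (cases "x \<in> PU ls")
      case False
      then obtain k where k: "k < n" "A k x \<notin> U (ls!k)" using lenl unfolding pow_U_def A_def by auto
      have "lsec (c (js!k)) (phi js k) (A k x) (ls!k) = 0" using k(2) unfolding lsec_def by simp
      then have "elem_image \<alpha> n (T js) x ls = 0" unfolding E using k(1) by (intro prod_zero) auto
      moreover have "\<eta> x ls = 0" by (rule fib_zero[OF sectionsD(1)[OF eta] False])
      ultimately show ?thesis by simp
    next
      case xl: True
      have F: "lsec (c (js!k)) (phi js k) (A k x) (ls!k) = phi js k (A k x) * g (ls!k) (c (js!k)) (A k x)"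
        if k: "k < n" for k
      proof (cases "A k x \<in> U (c (js!k))")
        case True
        moreover have "A k x \<in> U (ls!k)" using PU_mem[OF xl k] unfolding A_def .
        ultimately show ?thesis unfolding lsec_def by simp
      next
        case False
        then have "A k x \<notin> C (js!k)" using CU by blast
        then have "phi js k (A k x) = 0" by (rule phiz[OF _ k])
        then show ?thesis unfolding lsec_def using False by simp
      qed
      have E2: "elem_image \<alpha> n (T js) x ls = (\<Prod>k<n. phi js k (A k x)) * (\<Prod>k<n. g (ls!k) (c (js!k)) (A k x))"
        unfolding E prod.distrib[symmetric] by (intro prod.cong refl F) simp
      have rho_eq: "rho js x = chi (js!m) x * (\<Prod>k<m. chi (js!k) (A k x))"
        unfolding rho_def m prod.lessThan_Suc by (simp add: Am mult.commute)
      have pl: "(\<Prod>k<m. lam (js!k) (A k x)) * (\<Prod>k<m. lam (js!k) (A k x)) = (\<Prod>k<m. chi (js!k) (A k x))"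
        unfolding prod.distrib[symmetric] lam2 ..
      have "(\<Prod>k<n. phi js k (A k x)) = (\<Prod>k<m. phi js k (A k x)) * phi js m (A m x)"
        unfolding m by simp
      also have "(\<Prod>k<m. phi js k (A k x)) = complex_of_real (\<Prod>k<m. lam (js!k) (A k x))"
        unfolding of_real_prod by (intro prod.cong refl) (simp add: phi_def)
      also have "phi js m (A m x) = \<eta> x (map c js) * complex_of_real (R js x)"
        unfolding phi_def Lf_def Am by simp
      finally have "(\<Prod>k<n. phi js k (A k x)) =
          \<eta> x (map c js) * complex_of_real (chi (js!m) x * ((\<Prod>k<m. lam (js!k) (A k x)) * (\<Prod>k<m. lam (js!k) (A k x))))"
        unfolding R_def by (simp add: algebra_simps)
      also have "\<dots> = \<eta> x (map c js) * complex_of_real (rho js x)"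
        unfolding pl rho_eq ..
      finally have P1: "(\<Prod>k<n. phi js k (A k x)) = \<eta> x (map c js) * complex_of_real (rho js x)" .
      show ?thesis
      proof (cases "rho js x = 0")
        case True
        then show ?thesis unfolding E2 P1 by simp
      next
        case False
        have nz: "chi (js!k) (A k x) \<noteq> 0" if "k < n" for k
          using False that unfolding rho_def by auto
        have xk: "x \<in> PU (map c js)"
          unfolding pow_U_def
        proof (intro CollectI conjI allI impI)
          show "length (map c js) = n" using len by simp
          fix k assume k: "k < n"
          have "A k x \<in> C (js!k)" using nz[OF k] chz by blast
          then show "(\<alpha> ^^ (n - 1 - k)) x \<in> U (map c js ! k)" using CU k len unfolding A_def by auto
        qed
        have "\<eta> x ls = PG ls (map c js) x * \<eta> x (map c js)"
          by (rule fib_trans[OF sectionsD(1)[OF eta] xl xk])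
        moreover have "PG ls (map c js) x = (\<Prod>k<n. g (ls!k) (c (js!k)) (A k x))"
          unfolding pow_g_def A_def using len by (intro prod.cong refl) simp
        ultimately show ?thesis unfolding E2 P1 by (simp add: algebra_simps)
      qed
    qed
  qed

  have wf: "tp_wf U g n zs"
    unfolding tp_wf_def zs_def
  proof
    fix z assume "z \<in> set (map T (List.n_lists n Ps))"
    then obtain js where js: "js \<in> set (List.n_lists n Ps)" "z = T js" by auto
    have "length js = n" by (rule length_n_lists_elem[OF js(1)])
    then show "length z = n \<and> set z \<subseteq> sections U g" using Tsec js(2) by blast
  qed
  have "Es \<alpha> n zs x ls = \<eta> x ls" for x ls
  proof -
    have "Es \<alpha> n zs x ls = (\<Sum>js\<leftarrow>List.n_lists n Ps. \<eta> x ls * complex_of_real (rho js x))"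
      unfolding Es_def zs_def map_map o_def
      by (intro arg_cong[where f=sum_list] map_cong refl elem_T length_n_lists_elem) simp
    also have "\<dots> = \<eta> x ls * complex_of_real (\<Sum>js\<leftarrow>List.n_lists n Ps. rho js x)"
      by (rule sum_list_ofreal)
    also have "(\<Sum>js\<leftarrow>List.n_lists n Ps. rho js x) = (\<Prod>k<n. \<Sum>j\<leftarrow>Ps. chi j (A k x))"
      unfolding rho_def by (rule prod_sum_nlists)
    also have "\<dots> = 1" by (simp add: ch1)
    finally show ?thesis by simp
  qed
  then have "Es \<alpha> n zs = \<eta>" by (intro ext)
  then show ?thesis using wf by blast
qed

end


theorem proposition3p1:
  fixes \<alpha> :: "'a::metric_space \<Rightarrow> 'a"
    and U :: "'i \<Rightarrow> 'a set" and g :: "'i \<Rightarrow> 'i \<Rightarrow> 'a \<Rightarrow> complex" and n :: nat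
  assumes "compact (UNIV :: 'a set)"
    and "bij \<alpha>" and "continuous_on UNIV \<alpha>" and "continuous_on UNIV (inv \<alpha>)"
    and "is_cocycle U g"
    and "n \<ge> 1"
  shows "\<exists>\<psi>.
     (\<forall>Z. tp_cauchy U g \<alpha> n Z \<longrightarrow> \<psi> Z \<in> sections (pow_U \<alpha> U n) (pow_g \<alpha> g n))
   \<and> (\<forall>\<eta>\<in>sections (pow_U \<alpha> U n) (pow_g \<alpha> g n). \<exists>Z. tp_cauchy U g \<alpha> n Z \<and> \<psi> Z = \<eta>)
   \<and> (\<forall>Z W. tp_cauchy U g \<alpha> n Z \<longrightarrow> tp_cauchy U g \<alpha> n W \<longrightarrow>
        (\<psi> Z = \<psi> W \<longleftrightarrow> (\<lambda>k. fs_norm U \<alpha> (fs_diff (Z k) (W k))) \<longlonglongrightarrow> 0))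
   \<and> (\<forall>Z W. tp_cauchy U g \<alpha> n Z \<longrightarrow> tp_cauchy U g \<alpha> n W \<longrightarrow>
        \<psi> (\<lambda>k. Z k @ W k) = sec_add (\<psi> Z) (\<psi> W))
   \<and> (\<forall>c Z. tp_cauchy U g \<alpha> n Z \<longrightarrow> \<psi> (\<lambda>k. fs_scale c (Z k)) = sec_scale c (\<psi> Z))
   \<and> (\<forall>f\<in>CX. \<forall>Z. tp_cauchy U g \<alpha> n Z \<longrightarrow> \<psi> (\<lambda>k. fs_ract (Z k) f) = bm_ract (\<psi> Z) f)
   \<and> (\<forall>f\<in>CX. \<forall>Z. tp_cauchy U g \<alpha> n Z \<longrightarrow> \<psi> (\<lambda>k. fs_lact \<alpha> f (Z k)) = bm_lact (\<alpha> ^^ n) f (\<psi> Z))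
   \<and> (\<forall>Z W. tp_cauchy U g \<alpha> n Z \<longrightarrow> tp_cauchy U g \<alpha> n W \<longrightarrow>
        unif_conv (\<lambda>k. fs_rip U \<alpha> (Z k) (W k)) (bm_rip (pow_U \<alpha> U n) (\<psi> Z) (\<psi> W)))
   \<and> (\<forall>Z W. tp_cauchy U g \<alpha> n Z \<longrightarrow> tp_cauchy U g \<alpha> n W \<longrightarrow>
        unif_conv (\<lambda>k. fs_lip U \<alpha> (Z k) (W k)) (bm_lip (pow_U \<alpha> U n) (\<alpha> ^^ n) (\<psi> Z) (\<psi> W)))
   \<and> (\<forall>\<xi>s. length \<xi>s = n \<and> set \<xi>s \<subseteq> sections U g \<longrightarrow>
        \<psi> (\<lambda>k. [\<xi>s]) = elem_image \<alpha> n \<xi>s)"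
  proof -
  interpret lb \<alpha> U g n using assms by (intro lb.intro) auto
  have surjZ: "\<exists>Z. tp_cauchy U g \<alpha> n Z \<and> Psi \<alpha> n Z = \<eta>" if eta: "\<eta> \<in> S" for \<eta>
  proof -
    obtain zs where zs: "tp_wf U g n zs" "Es \<alpha> n zs = \<eta>" using surj[OF eta] by blast
    have "fs_norm U \<alpha> (fs_diff zs zs) \<le> 0"
      by (rule norm_le[OF wf_diff[OF zs(1) zs(1)]]) (simp add: Es_diff[OF zs(1) zs(1)])
    then have "tp_cauchy U g \<alpha> n (\<lambda>k. zs)"
      unfolding tp_cauchy_def using zs(1) by (auto intro: order_le_less_trans)
    moreover have "Psi \<alpha> n (\<lambda>k. zs) = \<eta>" using zs(2) by (simp add: Psi_const)
    ultimately show ?thesis by blast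
  qed
  have single: "Es \<alpha> n [\<xi>s] = elem_image \<alpha> n \<xi>s" for \<xi>s :: "('a \<Rightarrow> 'i \<Rightarrow> complex) list"
    by (simp add: Es_def)
  show ?thesis
  proof (intro exI[of _ "Psi \<alpha> n"] conjI allI impI ballI)
    show "\<And>Z. tp_cauchy U g \<alpha> n Z \<Longrightarrow> Psi \<alpha> n Z \<in> S" by (rule psi_sec)
    show "\<And>\<eta>. \<eta> \<in> S \<Longrightarrow> \<exists>Z. tp_cauchy U g \<alpha> n Z \<and> Psi \<alpha> n Z = \<eta>" by (rule surjZ)
    show "\<And>Z W. tp_cauchy U g \<alpha> n Z \<Longrightarrow> tp_cauchy U g \<alpha> n W \<Longrightarrow>
        (Psi \<alpha> n Z = Psi \<alpha> n W) = (\<lambda>k. fs_norm U \<alpha> (fs_diff (Z k) (W k))) \<longlonglongrightarrow> 0"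
      by (rule Psi_iff)
    show "\<And>Z W. tp_cauchy U g \<alpha> n Z \<Longrightarrow> tp_cauchy U g \<alpha> n W \<Longrightarrow>
        Psi \<alpha> n (\<lambda>k. Z k @ W k) = sec_add (Psi \<alpha> n Z) (Psi \<alpha> n W)"
      by (rule Psi_add)
    show "\<And>c Z. tp_cauchy U g \<alpha> n Z \<Longrightarrow> Psi \<alpha> n (\<lambda>k. fs_scale c (Z k)) = sec_scale c (Psi \<alpha> n Z)"
      by (rule Psi_scale)
    show "\<And>f Z. f \<in> CX \<Longrightarrow> tp_cauchy U g \<alpha> n Z \<Longrightarrow> Psi \<alpha> n (\<lambda>k. fs_ract (Z k) f) = bm_ract (Psi \<alpha> n Z) f"
      by (rule Psi_ract)
    show "\<And>f Z. f \<in> CX \<Longrightarrow> tp_cauchy U g \<alpha> n Z \<Longrightarrow> Psi \<alpha> n (\<lambda>k. fs_lact \<alpha> f (Z k)) = bm_lact (\<alpha> ^^ n) f (Psi \<alpha> n Z)"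
      by (rule Psi_lact)
    show "\<And>Z W. tp_cauchy U g \<alpha> n Z \<Longrightarrow> tp_cauchy U g \<alpha> n W \<Longrightarrow>
        unif_conv (\<lambda>k. fs_rip U \<alpha> (Z k) (W k)) (bm_rip PU (Psi \<alpha> n Z) (Psi \<alpha> n W))"
      by (rule rip_conv)
    show "\<And>Z W. tp_cauchy U g \<alpha> n Z \<Longrightarrow> tp_cauchy U g \<alpha> n W \<Longrightarrow>
        unif_conv (\<lambda>k. fs_lip U \<alpha> (Z k) (W k)) (bm_lip PU (\<alpha> ^^ n) (Psi \<alpha> n Z) (Psi \<alpha> n W))"
      by (rule lip_conv)
    show "\<And>\<xi>s. length \<xi>s = n \<and> set \<xi>s \<subseteq> sections U g \<Longrightarrow> Psi \<alpha> n (\<lambda>k. [\<xi>s]) = elem_image \<alpha> n \<xi>s"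
      by (simp add: Psi_const single)
  qed
qed

end
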